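(* Let $P$ be a simple orthogonal polygon that has at least two N-extremities, and let $e$ be a lowermost N-extremity of $P$. Then for each $\theta\in(0,\pi/2)$: (i) for any N-extremity $e'$ of $P$ at a greater $y$-coordinate than $e$, no point of $e'$ belongs to $\{0^\circ,90^\circ\}$-Kernel$_\theta(P)$; (ii) if there is an N-extremity $e''\neq e$ at the same $y$-coordinate as $e$, then no point of $e$ and no point of $e''$ belongs to $\{0^\circ,90^\circ\}$-Kernel$_\theta(P)$. Analogous statements hold for E-, S- and W-extremities: if $P$ has at least two S-extremities and $e$ is a topmost one, then (i) no point of an S-extremity at smaller $y$-coordinate than $e$, and (ii) if another S-extremity lies at the same $y$-coordinate as $e$, no point of either of them, belongs to the kernel; if $P$ has at least two E-extremities and $e$ is a leftmost one, then (i) no point of an E-extremity at greater $x$-coordinate than $e$, and (ii) if another E-extremity lies at the same $x$-coordinate as $e$, no point of either of them, belongs to the kernel; if $P$ has at least two W-extremities and $e$ is a rightmost one, then (i) no point of a W-extremity at smaller $x$-coordinate than $e$, and (ii) if another W-extremity lies at the same $x$-coordinate as $e$, no point of either of them, belongs to the kernel (all for each $\theta\in(0,\pi/2)$).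
   Context: An orthogonal polygon is a polygon all of whose edges are horizontal or vertical. An edge is an N-edge (resp. S-, E-, W-edge) if it bounds the polygon from the north (resp. south, east, west), i.e. the interior of $P$ lies immediately below (resp. above, to the left, to the right) of it. For $D\in\{N,S,E,W\}$, a $D$-edge is a $D$-extremity if both its endpoints are convex vertices of $P$. For an angle $\beta$, a curve is $\beta$-convex if its intersection with every line forming counterclockwise angle $\beta$ with the positive $x$-axis is connected. For $\theta\in[0,\pi/2)$, two points $p,q\in P$ see each other with respect to $\{0^\circ,90^\circ\}$ rotated by $\theta$ if some curve contained in $P$ connecting them is both $\theta$-convex and $(\theta+90^\circ)$-convex; $\{0^\circ,90^\circ\}$-Kernel$_\theta(P)$ is the set of points of $P$ that see every point of $P$ in this sense. *)

theory Defs
  imports "HOL-Analysis.Analysis"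
begin

text \<open>Points of the plane are pairs (x,y) :: real \<times> real.
An orthogonal polygon is given by its cyclic list of vertices vs = [v0,...,v(n-1)];
edge i joins vs!i and vs!((i+1) mod n).\<close>

fun polypath :: "(real \<times> real) list \<Rightarrow> real \<Rightarrow> real \<times> real" where
  "polypath [] = linepath 0 0"
| "polypath [a] = linepath a a"
| "polypath [a, b] = linepath a b"
| "polypath (a # b # c # rest) = linepath a b +++ polypath (b # c # rest)"

definition boundary_path :: "(real \<times> real) list \<Rightarrow> real \<Rightarrow> real \<times> real" where
  "boundary_path vs = polypath (vs @ [hd vs])"

definition nxt :: "(real \<times> real) list \<Rightarrow> nat \<Rightarrow> nat" where
  "nxt vs i = (Suc i) mod length vs"

definition prv :: "(real \<times> real) list \<Rightarrow> nat \<Rightarrow> nat" where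
  "prv vs i = (i + length vs - 1) mod length vs"

text \<open>Simple orthogonal polygon: at least 4 vertices, every edge is non-degenerate and
horizontal or vertical, horizontal and vertical edges alternate (so every vertex is a
genuine right-angle corner), and the boundary is a simple closed curve.\<close>
definition orth_polygon :: "(real \<times> real) list \<Rightarrow> bool" where
  "orth_polygon vs \<longleftrightarrow>
     length vs \<ge> 4 \<and>
     (\<forall>i < length vs. vs ! i \<noteq> vs ! nxt vs i \<and>
        (fst (vs ! i) = fst (vs ! nxt vs i) \<or> snd (vs ! i) = snd (vs ! nxt vs i))) \<and>
     (\<forall>i < length vs. (fst (vs ! i) = fst (vs ! nxt vs i)) \<longleftrightarrow>
                       (snd (vs ! nxt vs i) = snd (vs ! nxt vs (nxt vs i)))) \<and>
     simple_path (boundary_path vs)"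

definition poly_interior :: "(real \<times> real) list \<Rightarrow> (real \<times> real) set" where
  "poly_interior vs = inside (path_image (boundary_path vs))"

definition poly_region :: "(real \<times> real) list \<Rightarrow> (real \<times> real) set" where
  "poly_region vs = path_image (boundary_path vs) \<union> poly_interior vs"

definition edge_seg :: "(real \<times> real) list \<Rightarrow> nat \<Rightarrow> (real \<times> real) set" where
  "edge_seg vs i = closed_segment (vs ! i) (vs ! nxt vs i)"

datatype dir = N | S | E | W

text \<open>Outward normal of a D-edge: the interior of P lies immediately on the side of -dvec D.\<close>
fun dvec :: "dir \<Rightarrow> real \<times> real" where
  "dvec N = (0, 1)" | "dvec S = (0, -1)" | "dvec E = (1, 0)" | "dvec W = (-1, 0)"

definition D_edge :: "(real \<times> real) list \<Rightarrow> dir \<Rightarrow> nat \<Rightarrow> bool" where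
  "D_edge vs D i \<longleftrightarrow> i < length vs \<and>
     (vs ! nxt vs i - vs ! i) \<bullet> dvec D = 0 \<and>
     (\<exists>\<epsilon>>0. \<forall>t. 0 < t \<and> t < \<epsilon> \<longrightarrow>
        midpoint (vs ! i) (vs ! nxt vs i) - t *\<^sub>R dvec D \<in> poly_interior vs)"

text \<open>Vertex i is convex (interior angle 90 degrees): the open quadrant spanned by its
two incident edges is locally contained in the interior of P.\<close>
definition convex_vertex :: "(real \<times> real) list \<Rightarrow> nat \<Rightarrow> bool" where
  "convex_vertex vs i \<longleftrightarrow>
     (\<exists>\<epsilon>>0. \<forall>t. 0 < t \<and> t < \<epsilon> \<longrightarrow>
        vs ! i + t *\<^sub>R ((vs ! prv vs i - vs ! i) + (vs ! nxt vs i - vs ! i)) \<in> poly_interior vs)"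

definition extremity :: "(real \<times> real) list \<Rightarrow> dir \<Rightarrow> nat \<Rightarrow> bool" where
  "extremity vs D i \<longleftrightarrow> D_edge vs D i \<and> convex_vertex vs i \<and> convex_vertex vs (nxt vs i)"

text \<open>Level of a point in direction D: y for N, -y for S, x for E, -x for W.
A lowermost N-extremity / topmost S / leftmost E / rightmost W extremity is one of
minimal level.\<close>
definition level :: "dir \<Rightarrow> real \<times> real \<Rightarrow> real" where
  "level D p = p \<bullet> dvec D"

definition line_at :: "real \<Rightarrow> real \<times> real \<Rightarrow> (real \<times> real) set" where
  "line_at \<beta> c = {c + t *\<^sub>R (cos \<beta>, sin \<beta>) | t. True}"

definition beta_convex :: "real \<Rightarrow> (real \<Rightarrow> real \<times> real) \<Rightarrow> bool" where
  "beta_convex \<beta> g \<longleftrightarrow> (\<forall>c. connected (path_image g \<inter> line_at \<beta> c))"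

definition sees_theta :: "(real \<times> real) set \<Rightarrow> real \<Rightarrow> real \<times> real \<Rightarrow> real \<times> real \<Rightarrow> bool" where
  "sees_theta P \<theta> p q \<longleftrightarrow> (\<exists>g. path g \<and> path_image g \<subseteq> P \<and> pathstart g = p \<and>
      pathfinish g = q \<and> beta_convex \<theta> g \<and> beta_convex (\<theta> + pi / 2) g)"

definition kernel_theta :: "(real \<times> real) set \<Rightarrow> real \<Rightarrow> (real \<times> real) set" where
  "kernel_theta P \<theta> = {p \<in> P. \<forall>q \<in> P. sees_theta P \<theta> p q}"

end

theory Submission
  imports Defs
begin


definition cf :: "real \<times> real \<Rightarrow> complex" where "cf v = Complex (fst v) (snd v)"
definition cg :: "complex \<Rightarrow> real \<times> real" where "cg z = (Re z, Im z)"

lemma linear_cf: "linear cf"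
  by (rule linearI) (auto simp: cf_def complex_eq_iff)
lemma linear_cg: "linear cg"
  by (rule linearI) (auto simp: cg_def)
lemma cg_cf[simp]: "cg (cf v) = v" by (simp add: cf_def cg_def)
lemma cf_cg[simp]: "cf (cg z) = z" by (simp add: cf_def cg_def complex_eq_iff)
lemma inj_cf: "inj cf" by (metis cg_cf injI)
lemma norm_cf: "norm (cf v) = norm v"
  by (simp add: cf_def norm_prod_def complex_norm)
lemma norm_cg: "norm (cg z) = norm z"
  by (metis cf_cg norm_cf)

lemma bl_cf: "bounded_linear cf" using linear_cf linear_conv_bounded_linear by blast
lemma bl_cg: "bounded_linear cg" using linear_cg linear_conv_bounded_linear by blast

lemma homeo_cf: "homeomorphism (- X) (- (cf ` X)) cf cg"
proof -
  have a: "cf ` (- X) = - (cf ` X)"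
  proof
    show "cf ` (- X) \<subseteq> - (cf ` X)" by (auto dest: injD[OF inj_cf])
    show "- (cf ` X) \<subseteq> cf ` (- X)"
    proof
      fix z assume "z \<in> - (cf ` X)"
      then have "cg z \<in> - X" by (metis ComplI Compl_iff cf_cg image_eqI)
      then show "z \<in> cf ` (- X)" by (metis cf_cg image_eqI)
    qed
  qed
  have b: "cg ` (- (cf ` X)) = - X"
    using a by (metis (no_types, lifting) cg_cf image_cong image_ident image_image)
  show ?thesis unfolding homeomorphism_def
    using a b linear_continuous_on[OF bl_cf] linear_continuous_on[OF bl_cg] by auto
qed

lemma bounded_cg: "bounded T \<Longrightarrow> bounded (cg ` T)"
  by (simp add: bounded_linear_image bl_cg)

lemma jordan_R2:
  fixes c :: "real \<Rightarrow> real \<times> real"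
  assumes "simple_path c" "pathfinish c = pathstart c"
  shows "path_image c \<subseteq> closure (outside (path_image c))"
proof
  fix x assume x: "x \<in> path_image c"
  let ?c = "cf \<circ> c"
  have sp: "simple_path ?c" using assms(1) simple_path_linear_image_eq[OF linear_cf inj_cf] by simp
  have cl: "pathfinish ?c = pathstart ?c" using assms(2) by (simp add: pathfinish_compose pathstart_compose)
  have pi: "path_image ?c = cf ` path_image c" by (simp add: path_image_compose)
  have fr: "frontier (outside (cf ` path_image c)) = cf ` path_image c"
    using Jordan_inside_outside[OF sp cl] pi by simp
  have "cf x \<in> closure (outside (cf ` path_image c))"
    using fr x frontier_def by fastforce
  show "x \<in> closure (outside (path_image c))"
    unfolding closure_approachable
  proof (intro allI impI)
    fix e :: real assume e: "e > 0"
    obtain z where z: "z \<in> outside (cf ` path_image c)" "dist z (cf x) < e"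
      using \<open>cf x \<in> closure _\<close> e unfolding closure_approachable by blast
    have znot: "z \<notin> cf ` path_image c" using z(1) outside_no_overlap by blast
    have ub: "\<not> bounded (connected_component_set (- (cf ` path_image c)) z)"
      using z(1) by (simp add: outside)
    have cgz: "cg z \<in> - path_image c" using znot by (metis ComplI cf_cg image_eqI)
    have "connected_component_set (- (cf ` path_image c)) (cf (cg z)) =
          cf ` connected_component_set (- path_image c) (cg z)"
      by (rule connected_component_set_homeomorphism[OF homeo_cf cgz])
    then have "connected_component_set (- path_image c) (cg z) =
          cg ` connected_component_set (- (cf ` path_image c)) z"
      by (simp add: image_image)
    then have "\<not> bounded (connected_component_set (- path_image c) (cg z))"
      apply simp
    proof
      assume "bounded (cg ` connected_component_set (- (cf ` path_image c)) z)"
      then have "bounded (cf ` cg ` connected_component_set (- (cf ` path_image c)) z)"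
        using bounded_linear_image bl_cf by blast
      then show False using ub by (simp add: image_image)
    qed
    then have "cg z \<in> outside (path_image c)" by (simp add: outside)
    moreover have "dist (cg z) x < e"
      using z(2) by (metis cg_cf dist_norm linear_cg linear_diff norm_cg)
    ultimately show "\<exists>y\<in>outside (path_image c). dist y x < e" by blast
  qed
qed


definition segl :: "(real \<times> real) list \<Rightarrow> nat \<Rightarrow> (real \<times> real) set" where
  "segl xs i = closed_segment (xs ! i) (xs ! Suc i)"

lemma segl_Suc[simp]: "segl (a # t) (Suc i) = segl t i" by (simp add: segl_def)
lemma segl_0[simp]: "segl (a # b # t) 0 = closed_segment a b" by (simp add: segl_def)

lemma polypath_props:
  "length xs \<ge> 2 \<Longrightarrow> path (polypath xs) \<and> pathstart (polypath xs) = hd xs \<and>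
     pathfinish (polypath xs) = last xs \<and>
     path_image (polypath xs) = (\<Union>i<length xs - 1. segl xs i)"
proof (induction xs rule: polypath.induct)
  case (3 a b)
  have "{..<Suc 0} = {0::nat}" by auto
  then show ?case by (simp add: segl_def)
next
  case (4 a b c rest)
  let ?t = "b # c # rest"
  have IH: "path (polypath ?t) \<and> pathstart (polypath ?t) = b \<and> pathfinish (polypath ?t) = last ?t \<and>
     path_image (polypath ?t) = (\<Union>i<length ?t - 1. segl ?t i)"
    using 4 by simp
  have u: "(\<Union>i<length (a # ?t) - 1. segl (a # ?t) i) = segl (a#?t) 0 \<union> (\<Union>i<length ?t - 1. segl ?t i)"
  proof -
    have "{..<length (a # ?t) - 1} = insert 0 (Suc ` {..<length ?t - 1})"
      by (simp add: lessThan_Suc_eq_insert_0)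
    then show ?thesis by simp
  qed
  show ?case using IH u
    by (simp add: path_image_join)
qed auto

lemma polypath_arc:
  "arc (polypath xs) \<Longrightarrow> length xs \<ge> 2 \<Longrightarrow>
    (\<forall>i < length xs - 1. xs ! i \<noteq> xs ! Suc i) \<and>
    (\<forall>i j. i < j \<longrightarrow> j < length xs - 1 \<longrightarrow>
       segl xs i \<inter> segl xs j \<subseteq> (if j = Suc i then {xs ! j} else {}))"
proof (induction xs rule: polypath.induct)
  case (3 a b)
  then show ?case using arc_distinct_ends[of "linepath a b"] by auto
next
  case (4 a b c rest)
  let ?t = "b # c # rest"
  have P: "path (polypath ?t) \<and> pathstart (polypath ?t) = b \<and> pathfinish (polypath ?t) = last ?t \<and>
     path_image (polypath ?t) = (\<Union>i<length ?t - 1. segl ?t i)"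
    using polypath_props[of ?t] by simp
  have arcs: "arc (linepath a b)" "arc (polypath ?t)"
    "closed_segment a b \<inter> path_image (polypath ?t) \<subseteq> {b}"
    using "4.prems"(1) arc_join_eq[of "linepath a b" "polypath ?t"] P by auto
  have IH: "(\<forall>i < length ?t - 1. ?t ! i \<noteq> ?t ! Suc i) \<and>
    (\<forall>i j. i < j \<longrightarrow> j < length ?t - 1 \<longrightarrow>
       segl ?t i \<inter> segl ?t j \<subseteq> (if j = Suc i then {?t ! j} else {}))"
    using 4 arcs by simp
  have ab: "a \<noteq> b" using arcs(1) arc_distinct_ends by fastforce
  have d: "\<forall>i < length (a#?t) - 1. (a#?t) ! i \<noteq> (a#?t) ! Suc i"
  proof (intro allI impI)
    fix i assume "i < length (a#?t) - 1"
    then show "(a#?t) ! i \<noteq> (a#?t) ! Suc i" using IH ab by (cases i) auto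
  qed
  have s: "segl (a#?t) i \<inter> segl (a#?t) j \<subseteq> (if j = Suc i then {(a#?t) ! j} else {})"
    if ij: "i < j" "j < length (a#?t) - 1" for i j
  proof (cases i)
    case (Suc i')
    then obtain j' where j': "j = Suc j'" using ij by (cases j) auto
    have "segl ?t i' \<inter> segl ?t j' \<subseteq> (if j' = Suc i' then {?t ! j'} else {})"
      using IH ij Suc j' by auto
    then show ?thesis using Suc j' by (simp only: segl_Suc nth_Cons_Suc nat.inject)
  next
    case 0
    then obtain j' where j': "j = Suc j'" using ij by (cases j) auto
    have sj: "segl ?t j' \<subseteq> path_image (polypath ?t)" using P ij j' by auto
    have s0: "segl (a#?t) 0 = closed_segment a b" by (simp add: segl_def)
    have sub: "segl (a#?t) i \<inter> segl (a#?t) j \<subseteq> {b}"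
      using arcs(3) sj s0 0 j' by (auto simp: segl_def)
    show ?thesis
    proof (cases "j' = 0")
      case True then show ?thesis using sub 0 j' by simp
    next
      case False
      have bin: "b \<in> segl ?t 0" by (simp add: segl_def)
      have "b \<notin> segl ?t j'"
      proof
        assume "b \<in> segl ?t j'"
        then have bb: "b \<in> segl ?t 0 \<inter> segl ?t j'" using bin by blast
        have "segl ?t 0 \<inter> segl ?t j' \<subseteq> (if j' = Suc 0 then {?t ! j'} else {})"
        proof -
          have "0 < j'" "j' < length ?t - 1" using False ij j' by auto
          then show ?thesis using IH by blast
        qed
        then have "j' = 1 \<and> b = c" using bb by (auto split: if_splits)
        then show False using IH by force
      qed
      then show ?thesis using sub 0 j' False by (auto simp: segl_def)
    qed
  qed
  show ?case using d s by blast
qed auto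



lemma loop_basic:
  assumes n: "length vs \<ge> 3"
  defines "L \<equiv> vs @ [hd vs]"
  shows "boundary_path vs = polypath L" "length L = Suc (length vs)"
    "\<And>i. i < length vs \<Longrightarrow> segl L i = edge_seg vs i"
    "path (boundary_path vs)" "pathfinish (boundary_path vs) = pathstart (boundary_path vs)"
    "path_image (boundary_path vs) = (\<Union>i<length vs. edge_seg vs i)"
proof -
  show "boundary_path vs = polypath L" by (simp add: boundary_path_def L_def)
  show "length L = Suc (length vs)" by (simp add: L_def)
  have vne: "vs \<noteq> []" using n by auto
  have Ln: "L ! i = (if i < length vs then vs ! i else vs ! 0)" if "i \<le> length vs" for i
    using that vne by (auto simp: L_def nth_append hd_conv_nth)
  show sg: "segl L i = edge_seg vs i" if "i < length vs" for i
  proof -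
    have m: "Suc i mod length vs = (if Suc i < length vs then Suc i else 0)"
    proof (cases "Suc i < length vs")
      case False then have "Suc i = length vs" using that by auto
      then show ?thesis by simp
    qed simp
    have "vs ! nxt vs i = L ! Suc i"
      using that Ln[of "Suc i"] m by (auto simp: nxt_def)
    then show ?thesis using that Ln[of i] by (simp add: segl_def edge_seg_def)
  qed
  have P: "path (polypath L) \<and> pathstart (polypath L) = hd L \<and>
     pathfinish (polypath L) = last L \<and> path_image (polypath L) = (\<Union>i<length L - 1. segl L i)"
    by (rule polypath_props) (use n in \<open>simp add: L_def\<close>)
  show "path (boundary_path vs)" using P by (simp add: boundary_path_def L_def)
  show "pathfinish (boundary_path vs) = pathstart (boundary_path vs)"
    using P vne by (simp add: boundary_path_def L_def)
  show "path_image (boundary_path vs) = (\<Union>i<length vs. edge_seg vs i)"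
    using P sg by (simp add: boundary_path_def L_def)
qed

lemma loop_disj_L:
  assumes n: "length vs \<ge> 3" and sp: "simple_path (polypath (vs @ [hd vs]))"
    and ij: "i < j" "j < length vs" "j \<noteq> Suc i" "\<not> (i = 0 \<and> j = length vs - 1)"
  shows "segl (vs @ [hd vs]) i \<inter> segl (vs @ [hd vs]) j = {}"
proof -
  define L where "L = vs @ [hd vs]"
  define T where "T = tl L"
  have vne: "vs \<noteq> []" using n by auto
  have lenL: "length L = Suc (length vs)" by (simp add: L_def)
  have lenT: "length T = length vs" by (simp add: T_def lenL)
  obtain v0 v1 c rest where Lf: "L = v0 # v1 # c # rest"
    using n unfolding L_def
    by (cases vs; cases "tl vs"; cases "tl (tl vs)") (auto)
  have v0: "v0 = hd vs" using Lf by (cases vs) (auto simp: L_def)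
  have T: "T = v1 # c # rest" using Lf by (simp add: T_def)
  have pp: "polypath L = linepath v0 v1 +++ polypath T" using Lf T by simp
  have PT: "path (polypath T) \<and> pathstart (polypath T) = hd T \<and>
     pathfinish (polypath T) = last T \<and> path_image (polypath T) = (\<Union>i<length T - 1. segl T i)"
    by (rule polypath_props) (simp add: T)
  have lastT: "last T = v0" using Lf T v0 by (metis L_def last.simps last_snoc list.distinct(1))
  have j: "arc (polypath T)" "closed_segment v0 v1 \<inter> path_image (polypath T) \<subseteq> {v0, v1}"
    using sp[folded L_def] simple_path_join_loop_eq[of "polypath T" "linepath v0 v1"] PT pp T lastT
    by auto
  have A: "(\<forall>i < length T - 1. T ! i \<noteq> T ! Suc i) \<and>
    (\<forall>i j. i < j \<longrightarrow> j < length T - 1 \<longrightarrow>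
       segl T i \<inter> segl T j \<subseteq> (if j = Suc i then {T ! j} else {}))"
    by (rule polypath_arc[OF j(1)]) (simp add: T)
  have sL: "segl L (Suc k) = segl T k" for k using Lf T by simp
  obtain j' where j': "j = Suc j'" using ij by (cases j) auto
  show ?thesis
  proof (cases i)
    case (Suc i')
    have "segl T i' \<inter> segl T j' \<subseteq> (if j' = Suc i' then {T ! j'} else {})"
      using A[THEN conjunct2, rule_format, of i' j'] ij Suc j' lenT by auto
    then show ?thesis using Suc j' sL ij by (simp add: L_def[symmetric])
  next
    case 0
    have jj: "1 \<le> j'" "j' < length vs - 2" using ij 0 j' by auto
    have sub: "segl T j' \<subseteq> path_image (polypath T)" using PT jj lenT by auto
    have s0: "segl L 0 = closed_segment v0 v1" using Lf by simp
    have n1: "v1 \<notin> segl T j'"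
    proof
      assume a: "v1 \<in> segl T j'"
      have "v1 \<in> segl T 0" using T by simp
      moreover have "segl T 0 \<inter> segl T j' \<subseteq> (if j' = Suc 0 then {T ! j'} else {})"
        using A[THEN conjunct2, rule_format, of 0 j'] jj lenT by auto
      ultimately have "v1 = T ! 1" using a by (auto split: if_splits)
      moreover have "T ! 0 \<noteq> T ! 1" using A lenT n by auto
      ultimately show False using T by simp
    qed
    have n0: "v0 \<notin> segl T j'"
    proof
      assume a: "v0 \<in> segl T j'"
      have lt: "length T - 2 < length T - 1" using lenT n by auto
      have "T ! (length T - 1) = v0" using lastT T by (metis last_conv_nth list.distinct(1))
      then have "v0 \<in> segl T (length T - 2)" using lenT n
        by (simp add: segl_def Suc_diff_Suc numeral_2_eq_2)
      moreover have "segl T j' \<inter> segl T (length T - 2) \<subseteq>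
          (if length T - 2 = Suc j' then {T ! (length T - 2)} else {})"
        using A[THEN conjunct2, rule_format, of j' "length T - 2"] jj lenT lt by auto
      ultimately have "v0 = T ! (length T - 2)" "length T - 2 = Suc j'" using a by (auto split: if_splits)
      moreover have "T ! (length T - 2) \<noteq> T ! Suc (length T - 2)" using A lt by blast
      moreover have "Suc (length T - 2) = length T - 1" using lenT n by auto
      ultimately show False using \<open>T ! (length T - 1) = v0\<close> by simp
    qed
    have "segl L 0 \<inter> segl L j \<subseteq> {v0, v1}" using j(2) s0 sL j' sub by blast
    then show ?thesis using n0 n1 0 sL j' by (auto simp: L_def[symmetric])
  qed
qed



lemma on_line:
  fixes w q :: "real \<times> real"
  assumes "m = (- sin \<beta>, cos \<beta>) \<or> m = (sin \<beta>, - cos \<beta>)" "(w - q) \<bullet> m = 0"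
  shows "w = q + ((w - q) \<bullet> (cos \<beta>, sin \<beta>)) *\<^sub>R (cos \<beta>, sin \<beta>)"
proof -
  obtain a b where ab: "w - q = (a, b)" by (cases "w - q")
  have e: "b * cos \<beta> = a * sin \<beta>" using assms ab by (auto simp: algebra_simps)
  have s: "sin \<beta> ^ 2 + cos \<beta> ^ 2 = 1" by simp
  have 1: "(a * cos \<beta> + b * sin \<beta>) * cos \<beta> = a" using e s by algebra
  have 2: "(a * cos \<beta> + b * sin \<beta>) * sin \<beta> = b" using e s by algebra
  have "w = q + (a, b)" using ab by (metis add.commute diff_add_cancel)
  moreover have ip: "(w - q) \<bullet> (cos \<beta>, sin \<beta>) = a * cos \<beta> + b * sin \<beta>" using ab by simp
  moreover have "(a, b) = (a * cos \<beta> + b * sin \<beta>) *\<^sub>R (cos \<beta>, sin \<beta>)"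
    using 1 2 by simp
  ultimately show ?thesis by simp
qed

lemma line_perp:
  assumes "m = (- sin \<beta>, cos \<beta>) \<or> m = (sin \<beta>, - cos \<beta>)" "w \<in> line_at \<beta> q"
  shows "(w - q) \<bullet> m = 0"
  using assms by (auto simp: line_at_def algebra_simps)

lemma isolate:
  fixes K P :: "(real \<times> real) set"
  assumes K: "connected K" "q \<in> K" "K \<subseteq> P" and KL: "connected (K \<inter> line_at \<beta> q)"
    and m: "m = (- sin \<beta>, cos \<beta>) \<or> m = (sin \<beta>, - cos \<beta>)"
    and r: "r > 0" "\<forall>w\<in>P. w \<noteq> q \<and> dist w q < r \<longrightarrow> (w - q) \<bullet> m < 0"
  shows "\<forall>w\<in>K. (w - q) \<bullet> m \<le> 0"
proof -
  define d :: "real \<times> real" where "d = (cos \<beta>, sin \<beta>)"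
  define \<phi> where "\<phi> z = (z - q) \<bullet> d" for z
  have nd: "norm d = 1" by (simp add: d_def norm_prod_def)
  have single: "K \<inter> line_at \<beta> q = {q}"
  proof (rule ccontr)
    assume "K \<inter> line_at \<beta> q \<noteq> {q}"
    moreover have qin: "q \<in> K \<inter> line_at \<beta> q"
    proof -
      have "q = q + 0 *\<^sub>R (cos \<beta>, sin \<beta>)" by (simp add: zero_prod_def)
      then show ?thesis using K unfolding line_at_def by blast
    qed
    ultimately obtain r' where r': "r' \<in> K \<inter> line_at \<beta> q" "r' \<noteq> q" by blast
    have r'eq: "r' = q + \<phi> r' *\<^sub>R d"
      using on_line[OF m line_perp[OF m]] r' by (simp add: \<phi>_def d_def)
    have nz: "\<phi> r' \<noteq> 0" using r'eq r'(2) by auto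
    define lam where "lam = min (1/2) (r / (2 * \<bar>\<phi> r'\<bar>))"
    have l: "0 < lam" "lam \<le> 1/2" "lam * \<bar>\<phi> r'\<bar> \<le> r / 2"
      using nz r(1) by (auto simp: lam_def min_def field_simps)
    have conn: "connected (\<phi> ` (K \<inter> line_at \<beta> q))"
      by (rule connected_continuous_image[OF _ KL]) (auto simp: \<phi>_def intro!: continuous_intros)
    have "lam * \<phi> r' \<in> \<phi> ` (K \<inter> line_at \<beta> q)"
    proof (cases "\<phi> r' > 0")
      case True
      have "\<phi> q \<le> lam * \<phi> r'" "lam * \<phi> r' \<le> \<phi> r'" using True l by (auto simp: \<phi>_def)
      then show ?thesis using conn qin r'(1) unfolding connected_iff_interval by blast
    next
      case False
      then have F: "\<phi> r' < 0" using nz by auto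
      have "\<phi> r' \<le> lam * \<phi> r'" "lam * \<phi> r' \<le> \<phi> q" using F l
        by (auto simp: \<phi>_def mult_le_cancel_right2 mult_nonneg_nonpos)
      then show ?thesis using conn qin r'(1) unfolding connected_iff_interval by blast
    qed
    then obtain z where z: "z \<in> K \<inter> line_at \<beta> q" "\<phi> z = lam * \<phi> r'"
      by (metis (no_types, lifting) imageE)
    have "z = q + \<phi> z *\<^sub>R d"
      using on_line[OF m line_perp[OF m]] z(1) by (simp add: \<phi>_def d_def)
    then have zeq: "z = q + (lam * \<phi> r') *\<^sub>R d" using z(2) by simp
    have "dist z q = lam * \<bar>\<phi> r'\<bar>" using zeq nd l(1) by (simp add: dist_norm abs_mult)
    then have dz: "dist z q < r" using l r(1) by linarith
    have "z \<noteq> q" using zeq l(1) nz nd by auto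
    then have "(z - q) \<bullet> m < 0" using r(2) dz z(1) K(3) by blast
    moreover have "(z - q) \<bullet> m = 0" using line_perp[OF m] z(1) by blast
    ultimately show False by simp
  qed
  let ?U = "{w. 0 < (w - q) \<bullet> m}"
  let ?V = "{w. (w - q) \<bullet> m < 0} \<union> ball q r"
  have oU: "open ?U" by (rule open_Collect_less) (auto intro!: continuous_intros)
  have oV: "open ?V"
    by (intro open_Un open_ball open_Collect_less) (auto intro!: continuous_intros)
  have d1: "?U \<inter> ?V \<inter> K = {}"
  proof -
    { fix w assume w: "w \<in> K" "0 < (w - q) \<bullet> m" "w \<in> ball q r"
      then have "w \<noteq> q" by auto
      then have "(w - q) \<bullet> m < 0" using r(2) w K(3) by (auto simp: dist_commute)
      then have False using w by simp }
    then show ?thesis by auto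
  qed
  have d2: "K \<subseteq> ?U \<union> ?V"
  proof
    fix w assume w: "w \<in> K"
    show "w \<in> ?U \<union> ?V"
    proof (cases "(w - q) \<bullet> m = 0")
      case True
      then have "w \<in> line_at \<beta> q"
        using on_line[OF m True] unfolding line_at_def by blast
      then have "w = q" using single w by blast
      then show ?thesis using r(1) by auto
    next
      case False then show ?thesis by auto
    qed
  qed
  have "q \<in> ball q r" using r(1) by simp
  then have "?V \<inter> K \<noteq> {}" using K(2) by blast
  then have "?U \<inter> K = {}" using connectedD[OF K(1) oU oV d1 d2] by blast
  then show ?thesis by (metis (mono_tags) IntI empty_iff mem_Collect_eq not_less)
qed

lemma crossing:
  fixes K P :: "(real \<times> real) set" and n A p :: "real \<times> real"
  assumes K: "connected K" "p \<in> K" "A \<in> K" "K \<subseteq> P"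
    and eA: "A \<in> e" "\<forall>z\<in>e. (z - A) \<bullet> n = 0"
    and hz: "\<forall>w\<in>K. (w - A) \<bullet> n = 0 \<longrightarrow> w \<in> e"
    and r: "r > 0" "\<forall>z\<in>e. \<forall>w\<in>P. dist w z < r \<longrightarrow> (w - A) \<bullet> n \<le> 0"
  shows "(p - A) \<bullet> n \<le> 0"
proof -
  let ?U = "{w. 0 < (w - A) \<bullet> n}"
  let ?V = "{w. (w - A) \<bullet> n < 0} \<union> (\<Union>z\<in>e. ball z r)"
  have oU: "open ?U" by (rule open_Collect_less) (auto intro!: continuous_intros)
  have oV: "open ?V"
    by (intro open_Un open_UN open_ball open_Collect_less ballI) (auto intro!: continuous_intros)
  have d1: "?U \<inter> ?V \<inter> K = {}"
  proof -
    { fix w z assume w: "w \<in> K" "0 < (w - A) \<bullet> n" "z \<in> e" "w \<in> ball z r"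
      have "dist w z < r" using w(4) by (simp add: dist_commute)
      then have "(w - A) \<bullet> n \<le> 0" using r(2) K(4) w by blast
      then have False using w by simp }
    then show ?thesis by auto
  qed
  have d2: "K \<subseteq> ?U \<union> ?V"
  proof
    fix w assume w: "w \<in> K"
    show "w \<in> ?U \<union> ?V"
    proof (cases "(w - A) \<bullet> n = 0")
      case True
      then have we: "w \<in> e" using hz w by blast
      have "w \<in> ball w r" using r(1) by simp
      then show ?thesis using we by blast
    next
      case False then show ?thesis by auto
    qed
  qed
  have "A \<in> ball A r" using r(1) by simp
  then have "?V \<inter> K \<noteq> {}" using K(3) eA(1) by blast
  then have "?U \<inter> K = {}" using connectedD[OF K(1) oU oV d1 d2] by blast
  then show ?thesis using K(2) by (metis (mono_tags) IntI empty_iff mem_Collect_eq not_less)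
qed



lemma idx:
  assumes "k < length vs"
  shows "nxt vs k < length vs" "prv vs k < length vs" "nxt vs (prv vs k) = k" "prv vs (nxt vs k) = k"
    "\<And>i. i < length vs \<Longrightarrow> nxt vs i = k \<Longrightarrow> i = prv vs k"
proof -
  let ?n = "length vs"
  have n: "?n > 0" using assms by auto
  show "nxt vs k < ?n" using n by (simp add: nxt_def)
  show "prv vs k < ?n" using n by (simp add: prv_def)
  show "nxt vs (prv vs k) = k"
  proof (cases k)
    case 0 then show ?thesis using n by (simp add: nxt_def prv_def)
  next
    case (Suc k') then show ?thesis using assms by (simp add: nxt_def prv_def)
  qed
  show "prv vs (nxt vs k) = k"
  proof (cases "Suc k = ?n")
    case True then show ?thesis using n by (simp add: nxt_def prv_def)
  next
    case False then show ?thesis using assms by (simp add: nxt_def prv_def)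
  qed
  fix i assume i: "i < ?n" "nxt vs i = k"
  then have "prv vs (nxt vs i) = i"
  proof (cases "Suc i = ?n")
    case True then show ?thesis using n by (simp add: nxt_def prv_def)
  next
    case False
    then have "nxt vs i = Suc i" using i by (simp add: nxt_def)
    moreover have "(Suc i + ?n - 1) mod ?n = i" using i by simp
    ultimately show ?thesis by (simp add: prv_def)
  qed
  then show "i = prv vs k" using i by simp
qed

lemma inner_axes[simp]: "x \<bullet> (0::real, 1::real) = snd x" "x \<bullet> (0::real, -1::real) = - snd x"
  "x \<bullet> (1::real, 0::real) = fst x" "x \<bullet> (-1::real, 0::real) = - fst x"
  by (cases x; simp)+

lemma dvec_norm: "norm (dvec D) = 1" by (cases D) (auto simp: norm_prod_def)

lemma decomp:
  assumes "u \<bullet> dvec D = 0" "u \<noteq> 0"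
  shows "z = (z \<bullet> u / (u \<bullet> u)) *\<^sub>R u + (z \<bullet> dvec D) *\<^sub>R dvec D"
proof -
  obtain u1 u2 where u: "u = (u1, u2)" by (cases u)
  obtain z1 z2 where z: "z = (z1, z2)" by (cases z)
  show ?thesis
  proof (cases D)
    case N then have "u2 = 0" "u1 \<noteq> 0" using assms u by (auto simp: zero_prod_def)
    then show ?thesis using u z N by (simp add: field_simps)
  next
    case S then have "u2 = 0" "u1 \<noteq> 0" using assms u by (auto simp: zero_prod_def)
    then show ?thesis using u z S by (simp add: field_simps)
  next
    case E then have "u1 = 0" "u2 \<noteq> 0" using assms u by (auto simp: zero_prod_def)
    then show ?thesis using u z E by (simp add: field_simps)
  next
    case W then have "u1 = 0" "u2 \<noteq> 0" using assms u by (auto simp: zero_prod_def)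
    then show ?thesis using u z W by (simp add: field_simps)
  qed
qed

lemma par_adj:
  assumes op: "orth_polygon vs" and k: "k < length vs"
    and u: "(vs ! nxt vs k - vs ! k) \<bullet> dvec D = 0"
  shows "\<exists>c. vs ! prv vs k - vs ! k = c *\<^sub>R dvec D"
        "\<exists>c. vs ! nxt vs (nxt vs k) - vs ! nxt vs k = c *\<^sub>R dvec D"
proof -
  let ?A = "vs ! k" and ?B = "vs ! nxt vs k" and ?A' = "vs ! prv vs k" and ?B' = "vs ! nxt vs (nxt vs k)"
  have I: "nxt vs k < length vs" "prv vs k < length vs" "nxt vs (prv vs k) = k" using idx k by auto
  have ax: "\<And>i. i < length vs \<Longrightarrow> vs ! i \<noteq> vs ! nxt vs i \<and>
        (fst (vs ! i) = fst (vs ! nxt vs i) \<or> snd (vs ! i) = snd (vs ! nxt vs i))"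
    and alt: "\<And>i. i < length vs \<Longrightarrow> (fst (vs ! i) = fst (vs ! nxt vs i)) \<longleftrightarrow>
                       (snd (vs ! nxt vs i) = snd (vs ! nxt vs (nxt vs i)))"
    using op unfolding orth_polygon_def by auto
  have AB: "?A \<noteq> ?B" using ax k by blast
  have a1: "(fst ?A' = fst ?A) \<longleftrightarrow> (snd ?A = snd ?B)" using alt[OF I(2)] I(3) by simp
  have a2: "fst ?A' = fst ?A \<or> snd ?A' = snd ?A" using ax[OF I(2)] I(3) by simp
  have b1: "(fst ?A = fst ?B) \<longleftrightarrow> (snd ?B = snd ?B')" using alt[OF k] by simp
  have b2: "fst ?B = fst ?B' \<or> snd ?B = snd ?B'" using ax[OF I(1)] by simp
  have AB2: "fst ?A \<noteq> fst ?B \<or> snd ?A \<noteq> snd ?B" using AB by (auto simp: prod_eq_iff)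
  show "\<exists>c. ?A' - ?A = c *\<^sub>R dvec D"
  proof (cases D)
    case N then have "snd ?A = snd ?B" using u by (simp add: algebra_simps)
    then have "fst ?A' = fst ?A" using a1 by simp
    then show ?thesis using N by (intro exI[of _ "snd ?A' - snd ?A"]) (simp add: prod_eq_iff)
  next
    case S then have "snd ?A = snd ?B" using u by (simp add: algebra_simps)
    then have "fst ?A' = fst ?A" using a1 by simp
    then show ?thesis using S by (intro exI[of _ "snd ?A - snd ?A'"]) (simp add: prod_eq_iff)
  next
    case E then have "fst ?A = fst ?B" using u by (simp add: algebra_simps)
    then have "snd ?A \<noteq> snd ?B" using AB2 by simp
    then have "snd ?A' = snd ?A" using a1 a2 by simp
    then show ?thesis using E by (intro exI[of _ "fst ?A' - fst ?A"]) (simp add: prod_eq_iff)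
  next
    case W then have "fst ?A = fst ?B" using u by (simp add: algebra_simps)
    then have "snd ?A \<noteq> snd ?B" using AB2 by simp
    then have "snd ?A' = snd ?A" using a1 a2 by simp
    then show ?thesis using W by (intro exI[of _ "fst ?A - fst ?A'"]) (simp add: prod_eq_iff)
  qed
  show "\<exists>c. ?B' - ?B = c *\<^sub>R dvec D"
  proof (cases D)
    case N then have "snd ?A = snd ?B" using u by (simp add: algebra_simps)
    then have "fst ?A \<noteq> fst ?B" using AB2 by simp
    then have "fst ?B = fst ?B'" using b1 b2 by simp
    then show ?thesis using N by (intro exI[of _ "snd ?B' - snd ?B"]) (simp add: prod_eq_iff)
  next
    case S then have "snd ?A = snd ?B" using u by (simp add: algebra_simps)
    then have "fst ?A \<noteq> fst ?B" using AB2 by simp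
    then have "fst ?B = fst ?B'" using b1 b2 by simp
    then show ?thesis using S by (intro exI[of _ "snd ?B - snd ?B'"]) (simp add: prod_eq_iff)
  next
    case E then have "fst ?A = fst ?B" using u by (simp add: algebra_simps)
    then have "snd ?B = snd ?B'" using b1 by simp
    then show ?thesis using E by (intro exI[of _ "fst ?B' - fst ?B"]) (simp add: prod_eq_iff)
  next
    case W then have "fst ?A = fst ?B" using u by (simp add: algebra_simps)
    then have "snd ?B = snd ?B'" using b1 by simp
    then show ?thesis using W by (intro exI[of _ "fst ?B - fst ?B'"]) (simp add: prod_eq_iff)
  qed
qed

lemma edges_disj:
  assumes op: "orth_polygon vs" and ij: "i < length vs" "j < length vs" "i \<noteq> j"
    "j \<noteq> nxt vs i" "i \<noteq> nxt vs j"
  shows "edge_seg vs i \<inter> edge_seg vs j = {}"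
proof -
  have n: "length vs \<ge> 3" and sp: "simple_path (polypath (vs @ [hd vs]))"
    using op by (auto simp: orth_polygon_def boundary_path_def)
  have key: "edge_seg vs a \<inter> edge_seg vs b = {}"
    if ab: "a < b" "b < length vs" "b \<noteq> nxt vs a" "a \<noteq> nxt vs b" for a b
  proof -
    have "nxt vs a = Suc a" using ab by (simp add: nxt_def)
    then have b1: "b \<noteq> Suc a" using ab by simp
    have b2: "\<not> (a = 0 \<and> b = length vs - 1)"
    proof
      assume a: "a = 0 \<and> b = length vs - 1"
      have "Suc (length vs - 1) = length vs" using n by simp
      then have "nxt vs b = a" using a by (simp add: nxt_def)
      then show False using ab by simp
    qed
    have "segl (vs @ [hd vs]) a \<inter> segl (vs @ [hd vs]) b = {}"
      using loop_disj_L[OF n sp ab(1,2) b1 b2] .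
    then show ?thesis using loop_basic(3)[OF n, of a] loop_basic(3)[OF n, of b] ab by simp
  qed
  show ?thesis
  proof (cases "i < j")
    case True then show ?thesis using key ij by blast
  next
    case False then have "j < i" using ij by auto
    then show ?thesis using key[of j i] ij by blast
  qed
qed



lemma box_props:
  fixes A a b :: "real \<times> real"
  shows "convex {w. l1 < (w - A) \<bullet> a \<and> (w - A) \<bullet> a < u1 \<and> l2 < (w - A) \<bullet> b \<and> (w - A) \<bullet> b < u2}"
    "open {w. l1 < (w - A) \<bullet> a \<and> (w - A) \<bullet> a < u1 \<and> l2 < (w - A) \<bullet> b \<and> (w - A) \<bullet> b < u2}"
proof -
  have eq: "{w. l1 < (w - A) \<bullet> a \<and> (w - A) \<bullet> a < u1 \<and> l2 < (w - A) \<bullet> b \<and> (w - A) \<bullet> b < u2} =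
    {w. inner a w > l1 + inner a A} \<inter> {w. inner a w < u1 + inner a A} \<inter>
    {w. inner b w > l2 + inner b A} \<inter> {w. inner b w < u2 + inner b A}"
    by (auto simp: inner_diff_left inner_commute algebra_simps)
  show "convex {w. l1 < (w - A) \<bullet> a \<and> (w - A) \<bullet> a < u1 \<and> l2 < (w - A) \<bullet> b \<and> (w - A) \<bullet> b < u2}"
    unfolding eq by (intro convex_Int convex_halfspace_lt convex_halfspace_gt)
  show "open {w. l1 < (w - A) \<bullet> a \<and> (w - A) \<bullet> a < u1 \<and> l2 < (w - A) \<bullet> b \<and> (w - A) \<bullet> b < u2}"
    unfolding eq by (intro open_Int open_halfspace_lt open_halfspace_gt)
qed

lemma comp_out:
  assumes "connected C" "C \<inter> G = {}" "x \<in> C" "x \<in> outside G" "y \<in> C"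
  shows "y \<in> outside G"
proof -
  have "C \<subseteq> - G" using assms(2) by blast
  then have "connected_component (- G) x y" using assms unfolding connected_component_def by blast
  then show ?thesis using outside_same_component assms(4) by blast
qed

lemma comp_in:
  assumes "connected C" "C \<inter> G = {}" "x \<in> C" "x \<in> inside G" "y \<in> C"
  shows "y \<in> inside G"
proof -
  have "C \<subseteq> - G" using assms(2) by blast
  then have "connected_component (- G) x y" using assms unfolding connected_component_def by blast
  then show ?thesis using inside_same_component assms(4) by blast
qed

lemma seg_pt: "closed_segment P Q = {P + t *\<^sub>R (Q - P) | t. 0 \<le> t \<and> t \<le> 1}"
  unfolding closed_segment_def by (auto simp: algebra_simps)



lemma local_structure:
  assumes op: "orth_polygon vs" and ex: "extremity vs D k"
  shows "\<exists>r>0. (\<forall>z\<in>closed_segment (vs!k) (vs!nxt vs k). \<forall>w\<in>poly_region vs.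
              dist w z < r \<longrightarrow> (w - vs!k) \<bullet> dvec D \<le> 0)
     \<and> (\<forall>w\<in>poly_region vs. dist w (vs!k) < r \<longrightarrow> 0 \<le> (w - vs!k) \<bullet> (vs!nxt vs k - vs!k))
     \<and> (\<forall>w\<in>poly_region vs. dist w (vs!nxt vs k) < r \<longrightarrow>
              (w - vs!nxt vs k) \<bullet> (vs!nxt vs k - vs!k) \<le> 0)"
proof -
  define A where "A = vs!k"
  define B where "B = vs ! nxt vs k"
  define nv where "nv = dvec D"
  define u where "u = B - A"
  define G where "G = path_image (boundary_path vs)"
  define P where "P = poly_region vs"
  have k: "k < length vs" and uperp: "u \<bullet> nv = 0"
    and Dint: "\<exists>\<epsilon>>0. \<forall>t. 0 < t \<and> t < \<epsilon> \<longrightarrow> midpoint A B - t *\<^sub>R nv \<in> inside G"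
    using ex by (auto simp: extremity_def D_edge_def A_def B_def u_def nv_def poly_interior_def G_def)
  have n3: "length vs \<ge> 3" using op by (simp add: orth_polygon_def)
  have I: "nxt vs k < length vs" "prv vs k < length vs" "nxt vs (prv vs k) = k" "prv vs (nxt vs k) = k"
    using idx(1-4)[OF k] by auto
  have ax: "\<And>i. i < length vs \<Longrightarrow> vs ! i \<noteq> vs ! nxt vs i" using op by (simp add: orth_polygon_def)
  have AB: "A \<noteq> B" using ax[OF k] by (simp add: A_def B_def)
  have u0: "u \<noteq> 0" using AB by (simp add: u_def)
  have nn: "norm nv = 1" by (simp add: nv_def dvec_norm)
  have nvnv: "nv \<bullet> nv = 1" using nn by (metis norm_eq_1)
  have uu: "u \<bullet> u > 0" using u0 by simp
  have nu: "norm u > 0" using u0 by simp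
  define ua where "ua = inverse (u \<bullet> u) *\<^sub>R u"
  define sg where "sg w = (w - A) \<bullet> ua" for w
  define et where "et w = (w - A) \<bullet> nv" for w
  have sgu: "sg w = ((w - A) \<bullet> u) / (u \<bullet> u)" for w
    by (simp add: sg_def ua_def divide_inverse mult.commute)
  have nua: "norm ua = 1 / norm u"
    using nu by (simp add: ua_def power2_norm_eq_inner[symmetric] divide_inverse power2_eq_square)
  have dec: "w = A + sg w *\<^sub>R u + et w *\<^sub>R nv" for w
  proof -
    have "w - A = (((w - A) \<bullet> u) / (u \<bullet> u)) *\<^sub>R u + ((w - A) \<bullet> dvec D) *\<^sub>R dvec D"
      using decomp[of u D "w - A"] uperp u0 by (simp add: nv_def)
    then show ?thesis by (simp add: sgu et_def nv_def algebra_simps)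
  qed
  have coord: "sg (A + s *\<^sub>R u + h *\<^sub>R nv) = s \<and> et (A + s *\<^sub>R u + h *\<^sub>R nv) = h" for s h
  proof -
    have nu': "nv \<bullet> u = 0" using uperp by (simp add: inner_commute)
    have 1: "(s *\<^sub>R u + h *\<^sub>R nv) \<bullet> u = s * (u \<bullet> u)"
      using nu' by (simp add: inner_add_left)
    have 2: "(s *\<^sub>R u + h *\<^sub>R nv) \<bullet> nv = h"
      using uperp nvnv by (simp add: inner_add_left)
    have "A + s *\<^sub>R u + h *\<^sub>R nv - A = s *\<^sub>R u + h *\<^sub>R nv" by simp
    then show ?thesis using 1 2 uu unfolding sgu et_def by simp
  qed
  have inR: "A + s *\<^sub>R u + h *\<^sub>R nv \<in> {w. l1 < sg w \<and> sg w < u1 \<and> l2 < et w \<and> et w < u2}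
      \<longleftrightarrow> l1 < s \<and> s < u1 \<and> l2 < h \<and> h < u2" for s h l1 u1 l2 u2
    using coord[of s h] by simp
  have sgd: "\<bar>sg w - sg z\<bar> \<le> dist w z / norm u" for w z
  proof -
    have "sg w - sg z = (w - z) \<bullet> ua" by (simp add: sg_def inner_diff_left)
    then have "\<bar>sg w - sg z\<bar> \<le> norm (w - z) * norm ua" using Cauchy_Schwarz_ineq2 by metis
    then show ?thesis using nua by (simp add: dist_norm)
  qed
  have etd: "\<bar>et w - et z\<bar> \<le> dist w z" for w z
  proof -
    have "et w - et z = (w - z) \<bullet> nv" by (simp add: et_def inner_diff_left)
    then have "\<bar>et w - et z\<bar> \<le> norm (w - z) * norm nv" using Cauchy_Schwarz_ineq2 by metis
    then show ?thesis using nn by (simp add: dist_norm)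
  qed
  have Gu: "G = (\<Union>i<length vs. edge_seg vs i)" using loop_basic(6)[OF n3] by (simp add: G_def)
  have eA: "edge_seg vs k = closed_segment A B" by (simp add: edge_seg_def A_def B_def)
  have e_iff: "w \<in> closed_segment A B \<longleftrightarrow> et w = 0 \<and> 0 \<le> sg w \<and> sg w \<le> 1" for w
  proof
    assume "w \<in> closed_segment A B"
    then obtain t where t: "w = A + t *\<^sub>R u + 0 *\<^sub>R nv" "0 \<le> t" "t \<le> 1"
      unfolding seg_pt u_def by auto
    then show "et w = 0 \<and> 0 \<le> sg w \<and> sg w \<le> 1" using coord[of t 0] by simp
  next
    assume a: "et w = 0 \<and> 0 \<le> sg w \<and> sg w \<le> 1"
    then have "w = A + sg w *\<^sub>R (B - A)" using dec[of w] by (simp add: u_def)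
    then show "w \<in> closed_segment A B" unfolding seg_pt using a by blast
  qed
  obtain c where c: "vs ! prv vs k - A = c *\<^sub>R nv"
    using par_adj(1)[OF op k] uperp by (auto simp: A_def B_def u_def nv_def)
  obtain c' where c': "vs ! nxt vs (nxt vs k) - B = c' *\<^sub>R nv"
    using par_adj(2)[OF op k] uperp by (auto simp: A_def B_def u_def nv_def)
  define A' where "A' = vs ! prv vs k"
  define B' where "B' = vs ! nxt vs (nxt vs k)"
  have epA: "edge_seg vs (prv vs k) = closed_segment A' A" using I by (simp add: edge_seg_def A'_def A_def)
  have enB: "edge_seg vs (nxt vs k) = closed_segment B B'" by (simp add: edge_seg_def B'_def B_def)
  have ep_pts: "sg w = 0 \<and> (\<exists>t. 0 \<le> t \<and> t \<le> 1 \<and> et w = t * c)" if wA: "w \<in> closed_segment A' A" for w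
  proof -
    obtain t where t: "w = A' + t *\<^sub>R (A - A')" "0 \<le> t" "t \<le> 1" using wA unfolding seg_pt by auto
    have "A' = A + c *\<^sub>R nv" using c by (simp add: A'_def algebra_simps)
    then have "w = A + 0 *\<^sub>R u + ((1 - t) * c) *\<^sub>R nv" using t(1) by (simp add: algebra_simps)
    then show ?thesis using coord[of 0 "(1 - t) * c"] t by (intro conjI exI[of _ "1 - t"]) auto
  qed
  have en_pts: "sg w = 1 \<and> (\<exists>t. 0 \<le> t \<and> t \<le> 1 \<and> et w = t * c')" if wB: "w \<in> closed_segment B B'" for w
  proof -
    obtain t where t: "w = B + t *\<^sub>R (B' - B)" "0 \<le> t" "t \<le> 1" using wB unfolding seg_pt by auto
    have "w = A + 1 *\<^sub>R u + (t * c') *\<^sub>R nv" using t(1) c' by (simp add: B'_def u_def algebra_simps)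
    then show ?thesis using coord[of 1 "t * c'"] t by (intro conjI exI[of _ t]) auto
  qed
  define Ix where "Ix = {i. i < length vs \<and> i \<noteq> prv vs k \<and> i \<noteq> k \<and> i \<noteq> nxt vs k}"
  define Oth where "Oth = (\<Union>i\<in>Ix. edge_seg vs i)"
  have Gsub: "G \<subseteq> closed_segment A B \<union> closed_segment A' A \<union> closed_segment B B' \<union> Oth"
  proof
    fix w assume "w \<in> G"
    then obtain i where i: "i < length vs" "w \<in> edge_seg vs i" using Gu by auto
    show "w \<in> closed_segment A B \<union> closed_segment A' A \<union> closed_segment B B' \<union> Oth"
      using i eA epA enB by (cases "i = k \<or> i = prv vs k \<or> i = nxt vs k") (auto simp: Oth_def Ix_def)
  qed
  have eG: "closed_segment A B \<subseteq> G" using Gu eA k by auto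
  have eO: "closed_segment A B \<inter> Oth = {}"
  proof -
    { fix i assume i: "i \<in> Ix"
      then have i1: "i < length vs" "k \<noteq> i" "i \<noteq> nxt vs k" "i \<noteq> prv vs k"
        by (auto simp: Ix_def)
      then have "k \<noteq> nxt vs i" using idx(5)[OF k, of i] by metis
      note i1 this
      then have "edge_seg vs k \<inter> edge_seg vs i = {}" using edges_disj[OF op k, of i] by metis }
    then show ?thesis using eA by (auto simp: Oth_def)
  qed
  have cO: "closed Oth" unfolding Oth_def Ix_def by (intro closed_UN) (auto simp: edge_seg_def)
  obtain d0 where d0: "d0 > 0" "\<forall>x\<in>closed_segment A B. \<forall>y\<in>Oth. d0 \<le> dist x y"
    using separate_compact_closed[OF compact_segment cO eO] by blast
  define \<rho> where "\<rho> = (d0 / 2) / (norm u + 1)"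
  have rho: "\<rho> > 0" "\<rho> * norm u + \<rho> < d0"
  proof -
    have "norm u + 1 > 0" by (smt (verit) norm_ge_zero)
    moreover have "d0 / 2 > 0" using d0(1) by simp
    ultimately show "\<rho> > 0" unfolding \<rho>_def by (simp add: divide_pos_pos)
    have pz: "norm u + 1 \<noteq> 0" by (smt (verit) norm_ge_zero)
    have "\<rho> * norm u + \<rho> = \<rho> * (norm u + 1)" by (simp add: algebra_simps)
    also have "\<dots> = d0 / 2"
    proof -
      have gen: "\<And>x y::real. y \<noteq> 0 \<Longrightarrow> x / y * y = x" by simp
      show ?thesis unfolding \<rho>_def using gen[OF pz] .
    qed
    finally have "\<rho> * norm u + \<rho> = d0 / 2" .
    then show "\<rho> * norm u + \<rho> < d0" using d0 by simp
  qed
  have far: "w \<notin> Oth" if w: "- \<rho> < sg w" "sg w < 1 + \<rho>" "\<bar>et w\<bar> < \<rho>" for w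
  proof
    assume wO: "w \<in> Oth"
    define cc where "cc = max 0 (min 1 (sg w))"
    define z where "z = A + cc *\<^sub>R u + 0 *\<^sub>R nv"
    have z: "z \<in> closed_segment A B" using coord[of cc 0] e_iff[of z] by (simp add: z_def cc_def)
    have wz: "w - z = (sg w - cc) *\<^sub>R u + et w *\<^sub>R nv"
      using dec[of w] by (simp add: z_def algebra_simps)
    have cc: "\<bar>sg w - cc\<bar> \<le> \<rho>" using w rho by (auto simp: cc_def)
    have "norm (w - z) \<le> \<bar>sg w - cc\<bar> * norm u + \<bar>et w\<bar> * norm nv"
      unfolding wz by (rule order_trans[OF norm_triangle_ineq]) simp
    also have "\<dots> < \<rho> * norm u + \<rho>" using cc w(3) nn nu
      by (simp add: add_le_less_mono mult_right_mono)
    finally have "dist z w < d0" using rho by (simp add: dist_norm norm_minus_commute)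
    then show False using d0(2) z wO by fastforce
  qed
  have conn: "connected {w. l1 < sg w \<and> sg w < u1 \<and> l2 < et w \<and> et w < u2}" for l1 u1 l2 u2
    unfolding sg_def et_def using box_props(1) convex_connected by blast
  define Rc where "Rc = {w. 0 < sg w \<and> sg w < 1 \<and> 0 < et w \<and> et w < \<rho>}"
  define Dn where "Dn = {w. 0 < sg w \<and> sg w < 1 \<and> -\<rho> < et w \<and> et w < 0}"
  define Up where "Up = {w. -\<rho> < sg w \<and> sg w < 1 + \<rho> \<and> 0 < et w \<and> et w < \<rho>}"
  define Lf where "Lf = {w. -\<rho> < sg w \<and> sg w < 0 \<and> -\<rho> < et w \<and> et w < \<rho>}"
  define Rt where "Rt = {w. 1 < sg w \<and> sg w < 1 + \<rho> \<and> -\<rho> < et w \<and> et w < \<rho>}"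
  have cRc: "connected Rc" "connected Dn" "connected Up" "connected Lf" "connected Rt"
    unfolding Rc_def Dn_def Up_def Lf_def Rt_def using conn by blast+
  have GRc: "Rc \<inter> G = {}"
  proof -
    { fix w assume w: "w \<in> Rc" "w \<in> G"
      have "w \<notin> Oth" using w(1) rho by (intro far) (auto simp: Rc_def)
      moreover have "w \<notin> closed_segment A B" using w(1) e_iff[of w] by (auto simp: Rc_def)
      moreover have "w \<notin> closed_segment A' A" using w(1) ep_pts[of w] by (auto simp: Rc_def)
      moreover have "w \<notin> closed_segment B B'" using w(1) en_pts[of w] by (auto simp: Rc_def)
      ultimately have False using w(2) Gsub by blast }
    then show ?thesis by blast
  qed
  have GDn: "Dn \<inter> G = {}"
  proof -
    { fix w assume w: "w \<in> Dn" "w \<in> G"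
      have "w \<notin> Oth" using w(1) rho by (intro far) (auto simp: Dn_def)
      moreover have "w \<notin> closed_segment A B" using w(1) e_iff[of w] by (auto simp: Dn_def)
      moreover have "w \<notin> closed_segment A' A" using w(1) ep_pts[of w] by (auto simp: Dn_def)
      moreover have "w \<notin> closed_segment B B'" using w(1) en_pts[of w] by (auto simp: Dn_def)
      ultimately have False using w(2) Gsub by blast }
    then show ?thesis by blast
  qed
  have midA: "midpoint A B = A + (1/2) *\<^sub>R u + 0 *\<^sub>R nv"
    by (auto simp: midpoint_def u_def prod_eq_iff field_simps)
  have Dnin: "Dn \<subseteq> inside G"
  proof -
    obtain \<epsilon> where \<epsilon>: "\<epsilon> > 0" "\<forall>t. 0 < t \<and> t < \<epsilon> \<longrightarrow> midpoint A B - t *\<^sub>R nv \<in> inside G"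
      using Dint by blast
    define t0 where "t0 = min \<epsilon> \<rho> / 2"
    have t0: "0 < t0" "t0 < \<epsilon>" "t0 < \<rho>" using \<epsilon> rho by (auto simp: t0_def)
    have eqp: "midpoint A B - t0 *\<^sub>R nv = A + (1/2) *\<^sub>R u + (- t0) *\<^sub>R nv"
      using midA by (simp add: algebra_simps)
    have "midpoint A B - t0 *\<^sub>R nv \<in> Dn" unfolding eqp Dn_def
      by (rule iffD2[OF inR]) (use t0 in simp)
    moreover have "midpoint A B - t0 *\<^sub>R nv \<in> inside G" using \<epsilon> t0 by blast
    ultimately show ?thesis using comp_in[OF cRc(2) GDn] by blast
  qed
  have sp: "simple_path (boundary_path vs)" using op by (simp add: orth_polygon_def)
  have clo: "G \<subseteq> closure (outside G)"
    using jordan_R2[OF sp loop_basic(5)[OF n3]] by (simp add: G_def)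
  have Mclo: "midpoint A B \<in> closure (outside G)"
  proof -
    have "sg (midpoint A B) = 1/2 \<and> et (midpoint A B) = 0" unfolding midA by (rule coord)
    then have "midpoint A B \<in> closed_segment A B" using e_iff[of "midpoint A B"] by simp
    then show ?thesis using clo eG by blast
  qed
  have Rcout: "Rc \<subseteq> outside G"
  proof -
    define \<delta> where "\<delta> = min \<rho> (norm u / 2)"
    have \<delta>: "\<delta> > 0" using rho nu by (auto simp: \<delta>_def simp del: zero_less_norm_iff)
    obtain w where w: "w \<in> outside G" "dist w (midpoint A B) < \<delta>"
      using Mclo \<delta> unfolding closure_approachable by blast
    have sM: "sg (midpoint A B) = 1/2" "et (midpoint A B) = 0" unfolding midA using coord by blast+
    have s1: "\<bar>sg w - 1/2\<bar> < 1/2"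
    proof -
      have "\<bar>sg w - 1/2\<bar> \<le> dist w (midpoint A B) / norm u" using sgd[of w "midpoint A B"] sM by simp
      also have "\<dots> < \<delta> / norm u" using w(2) nu by (simp add: divide_strict_right_mono)
      also have "\<dots> \<le> (norm u / 2) / norm u" using nu by (simp add: \<delta>_def divide_right_mono)
      also have "\<dots> = 1/2" using nu by simp
      finally show ?thesis .
    qed
    have s1': "0 < sg w" "sg w < 1" using s1 unfolding abs_less_iff by linarith+
    have e1: "\<bar>et w\<bar> < \<rho>" using etd[of w "midpoint A B"] sM w(2) by (simp add: \<delta>_def)
    have "w \<in> Rc"
    proof (cases "et w > 0")
      case True then show ?thesis using s1' e1 by (auto simp: Rc_def)
    next
      case False
      show ?thesis
      proof (cases "et w = 0")
        case True
        then have "w \<in> closed_segment A B" using e_iff s1' by auto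
        then have "w \<in> G" using eG by blast
        then show ?thesis using w(1) outside_no_overlap by blast
      next
        case F2: False
        then have "w \<in> Dn" using False F2 s1' e1 by (auto simp: Dn_def)
        then have "w \<in> inside G" using Dnin by blast
        then show ?thesis using w(1) inside_Int_outside by blast
      qed
    qed
    then show ?thesis using comp_out[OF cRc(1) GRc _ w(1)] by blast
  qed
  have cneg: "c < 0"
  proof (rule ccontr)
    assume "\<not> c < 0"
    moreover have "c \<noteq> 0"
    proof
      assume "c = 0"
      then have "vs ! prv vs k = vs ! nxt vs (prv vs k)" using c I(3) by (simp add: A_def)
      then show False using ax[OF I(2)] by simp
    qed
    ultimately have cp: "c > 0" by simp
    obtain \<epsilon> where \<epsilon>: "\<epsilon> > 0" "\<forall>t. 0 < t \<and> t < \<epsilon> \<longrightarrow>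
        vs ! k + t *\<^sub>R ((vs ! prv vs k - vs ! k) + (vs ! nxt vs k - vs ! k)) \<in> inside G"
      using ex by (auto simp: extremity_def convex_vertex_def poly_interior_def G_def)
    define t where "t = min (\<epsilon>/2) (min (1/2) (\<rho> / (2 * c)))"
    have t: "0 < t" "t < \<epsilon>" "t < 1" "t * c < \<rho>"
    proof -
      show "0 < t" "t < \<epsilon>" "t < 1" using \<epsilon> rho cp by (auto simp: t_def)
      have "t \<le> \<rho> / (2 * c)" by (simp add: t_def)
      then have "t * c \<le> \<rho> / 2" using cp by (simp add: field_simps)
      then show "t * c < \<rho>" using rho by simp
    qed
    have eqp: "vs ! k + t *\<^sub>R ((vs ! prv vs k - vs ! k) + (vs ! nxt vs k - vs ! k))
        = A + t *\<^sub>R u + (t * c) *\<^sub>R nv" using c by (simp add: A_def B_def u_def algebra_simps)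
    have "A + t *\<^sub>R u + (t * c) *\<^sub>R nv \<in> inside G" using \<epsilon> t eqp by metis
    moreover have "A + t *\<^sub>R u + (t * c) *\<^sub>R nv \<in> Rc" unfolding Rc_def
      by (rule iffD2[OF inR]) (use t cp in simp)
    ultimately show False using Rcout inside_Int_outside by blast
  qed
  have c'neg: "c' < 0"
  proof (rule ccontr)
    assume "\<not> c' < 0"
    moreover have "c' \<noteq> 0"
    proof
      assume "c' = 0"
      then have "vs ! nxt vs k = vs ! nxt vs (nxt vs k)" using c' by (simp add: B_def)
      then show False using ax[OF I(1)] by simp
    qed
    ultimately have cp: "c' > 0" by simp
    obtain \<epsilon> where \<epsilon>: "\<epsilon> > 0" "\<forall>t. 0 < t \<and> t < \<epsilon> \<longrightarrow>
        vs ! nxt vs k + t *\<^sub>R ((vs ! prv vs (nxt vs k) - vs ! nxt vs k) +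
          (vs ! nxt vs (nxt vs k) - vs ! nxt vs k)) \<in> inside G"
      using ex by (auto simp: extremity_def convex_vertex_def poly_interior_def G_def)
    define t where "t = min (\<epsilon>/2) (min (1/2) (\<rho> / (2 * c')))"
    have t: "0 < t" "t < \<epsilon>" "t < 1" "t * c' < \<rho>"
    proof -
      show "0 < t" "t < \<epsilon>" "t < 1" using \<epsilon> rho cp by (auto simp: t_def)
      have "t \<le> \<rho> / (2 * c')" by (simp add: t_def)
      then have "t * c' \<le> \<rho> / 2" using cp by (simp add: field_simps)
      then show "t * c' < \<rho>" using rho by simp
    qed
    have eqp: "vs ! nxt vs k + t *\<^sub>R ((vs ! prv vs (nxt vs k) - vs ! nxt vs k) +
          (vs ! nxt vs (nxt vs k) - vs ! nxt vs k))
        = A + (1 - t) *\<^sub>R u + (t * c') *\<^sub>R nv" using c' I(4) by (simp add: A_def B_def u_def algebra_simps)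
    have "A + (1 - t) *\<^sub>R u + (t * c') *\<^sub>R nv \<in> inside G" using \<epsilon> t eqp by metis
    moreover have "A + (1 - t) *\<^sub>R u + (t * c') *\<^sub>R nv \<in> Rc" unfolding Rc_def
      by (rule iffD2[OF inR]) (use t cp in simp)
    ultimately show False using Rcout inside_Int_outside by blast
  qed
  have pUp1: "A + (1/2) *\<^sub>R u + (\<rho>/2) *\<^sub>R nv \<in> Up" unfolding Up_def
    by (rule iffD2[OF inR]) (use rho in simp)
  have pUp2: "A + (1/2) *\<^sub>R u + (\<rho>/2) *\<^sub>R nv \<in> Rc" unfolding Rc_def
    by (rule iffD2[OF inR]) (use rho in simp)
  have pUp: "A + (1/2) *\<^sub>R u + (\<rho>/2) *\<^sub>R nv \<in> Up \<inter> Rc" using pUp1 pUp2 by blast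
  have GUp: "Up \<inter> G = {}"
  proof -
    { fix w assume w: "w \<in> Up" "w \<in> G"
      have "w \<notin> Oth" using w(1) rho by (intro far) (auto simp: Up_def)
      moreover have "w \<notin> closed_segment A B" using w(1) e_iff[of w] by (auto simp: Up_def)
      moreover have "w \<notin> closed_segment A' A"
        using w(1) ep_pts[of w] cneg by (auto simp: Up_def zero_less_mult_iff)
      moreover have "w \<notin> closed_segment B B'"
        using w(1) en_pts[of w] c'neg by (auto simp: Up_def zero_less_mult_iff)
      ultimately have False using w(2) Gsub by blast }
    then show ?thesis by blast
  qed
  have Upout: "Up \<subseteq> outside G"
    using comp_out[OF cRc(3) GUp, of "A + (1/2) *\<^sub>R u + (\<rho>/2) *\<^sub>R nv"] pUp Rcout by blast
  have GLf: "Lf \<inter> G = {}"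
  proof -
    { fix w assume w: "w \<in> Lf" "w \<in> G"
      have "w \<notin> Oth" using w(1) rho by (intro far) (auto simp: Lf_def)
      moreover have "w \<notin> closed_segment A B" using w(1) e_iff[of w] by (auto simp: Lf_def)
      moreover have "w \<notin> closed_segment A' A" using w(1) ep_pts[of w] by (auto simp: Lf_def)
      moreover have "w \<notin> closed_segment B B'" using w(1) en_pts[of w] by (auto simp: Lf_def)
      ultimately have False using w(2) Gsub by blast }
    then show ?thesis by blast
  qed
  have GRt: "Rt \<inter> G = {}"
  proof -
    { fix w assume w: "w \<in> Rt" "w \<in> G"
      have "w \<notin> Oth" using w(1) rho by (intro far) (auto simp: Rt_def)
      moreover have "w \<notin> closed_segment A B" using w(1) e_iff[of w] by (auto simp: Rt_def)
      moreover have "w \<notin> closed_segment A' A" using w(1) ep_pts[of w] by (auto simp: Rt_def)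
      moreover have "w \<notin> closed_segment B B'" using w(1) en_pts[of w] by (auto simp: Rt_def)
      ultimately have False using w(2) Gsub by blast }
    then show ?thesis by blast
  qed
  have pLf1: "A + (-\<rho>/2) *\<^sub>R u + (\<rho>/2) *\<^sub>R nv \<in> Up" unfolding Up_def
    by (rule iffD2[OF inR]) (use rho in simp)
  have pLf2: "A + (-\<rho>/2) *\<^sub>R u + (\<rho>/2) *\<^sub>R nv \<in> Lf" unfolding Lf_def
    by (rule iffD2[OF inR]) (use rho in simp)
  have pLf: "A + (-\<rho>/2) *\<^sub>R u + (\<rho>/2) *\<^sub>R nv \<in> Up \<inter> Lf" using pLf1 pLf2 by blast
  have pRt1: "A + (1 + \<rho>/2) *\<^sub>R u + (\<rho>/2) *\<^sub>R nv \<in> Up" unfolding Up_def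
    by (rule iffD2[OF inR]) (use rho in simp)
  have pRt2: "A + (1 + \<rho>/2) *\<^sub>R u + (\<rho>/2) *\<^sub>R nv \<in> Rt" unfolding Rt_def
    by (rule iffD2[OF inR]) (use rho in simp)
  have pRt: "A + (1 + \<rho>/2) *\<^sub>R u + (\<rho>/2) *\<^sub>R nv \<in> Up \<inter> Rt" using pRt1 pRt2 by blast
  have Lfout: "Lf \<subseteq> outside G"
    using comp_out[OF cRc(4) GLf, of "A + (-\<rho>/2) *\<^sub>R u + (\<rho>/2) *\<^sub>R nv"] pLf Upout by blast
  have Rtout: "Rt \<subseteq> outside G"
    using comp_out[OF cRc(5) GRt, of "A + (1 + \<rho>/2) *\<^sub>R u + (\<rho>/2) *\<^sub>R nv"] pRt Upout by blast
  have Pout: "P \<inter> outside G = {}"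
  proof -
    have "P = G \<union> inside G" by (simp add: P_def poly_region_def poly_interior_def G_def)
    moreover have "G \<inter> outside G = {}" using outside_no_overlap by blast
    moreover have "inside G \<inter> outside G = {}" by (rule inside_Int_outside)
    ultimately show ?thesis by blast
  qed
  define r where "r = min \<rho> (\<rho> * norm u)"
  have r: "r > 0" "r \<le> \<rho>" "r / norm u \<le> \<rho>" using rho nu by (auto simp: r_def field_simps)
  have F1: "\<forall>z\<in>closed_segment A B. \<forall>w\<in>P. dist w z < r \<longrightarrow> et w \<le> 0"
  proof (intro ballI impI)
    fix z w assume z: "z \<in> closed_segment A B" and w: "w \<in> P" "dist w z < r"
    show "et w \<le> 0"
    proof (rule ccontr)
      assume "\<not> et w \<le> 0"
      have zc: "et z = 0" "0 \<le> sg z" "sg z \<le> 1" using z e_iff by auto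
      have "\<bar>sg w - sg z\<bar> < \<rho>"
        using sgd[of w z] w(2) r nu by (smt (verit) divide_strict_right_mono)
      moreover have "\<bar>et w - et z\<bar> < \<rho>" using etd[of w z] w(2) r by simp
      ultimately have "w \<in> Up" using zc \<open>\<not> et w \<le> 0\<close> by (auto simp: Up_def)
      then show False using Upout Pout w(1) by blast
    qed
  qed
  have F2: "\<forall>w\<in>P. dist w A < r \<longrightarrow> 0 \<le> (w - A) \<bullet> u"
  proof (intro ballI impI)
    fix w assume w: "w \<in> P" "dist w A < r"
    show "0 \<le> (w - A) \<bullet> u"
    proof (rule ccontr)
      assume a: "\<not> 0 \<le> (w - A) \<bullet> u"
      have sA: "sg A = 0" "et A = 0" using coord[of 0 0] by simp_all
      have "sg w < 0" using a uu by (simp add: sgu divide_neg_pos)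
      moreover have "\<bar>sg w - sg A\<bar> < \<rho>"
        using sgd[of w A] w(2) r nu by (smt (verit) divide_strict_right_mono)
      moreover have "\<bar>et w - et A\<bar> < \<rho>" using etd[of w A] w(2) r by simp
      ultimately have "w \<in> Lf" using sA by (auto simp: Lf_def)
      then show False using Lfout Pout w(1) by blast
    qed
  qed
  have F3: "\<forall>w\<in>P. dist w B < r \<longrightarrow> (w - B) \<bullet> u \<le> 0"
  proof (intro ballI impI)
    fix w assume w: "w \<in> P" "dist w B < r"
    show "(w - B) \<bullet> u \<le> 0"
    proof (rule ccontr)
      assume a: "\<not> (w - B) \<bullet> u \<le> 0"
      have Beq: "B = A + 1 *\<^sub>R u + 0 *\<^sub>R nv" by (simp add: u_def)
      have sB: "sg B = 1" "et B = 0" using coord[of 1 0] Beq by simp_all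
      have "sg w - 1 = ((w - B) \<bullet> u) / (u \<bullet> u)"
        using uu by (simp add: sgu u_def inner_diff_left field_simps)
      moreover have "0 < (w - B) \<bullet> u" using a by simp
      then have "0 < ((w - B) \<bullet> u) / (u \<bullet> u)" using uu by (rule divide_pos_pos)
      ultimately have "sg w > 1" by linarith
      moreover have "\<bar>sg w - sg B\<bar> < \<rho>"
        using sgd[of w B] w(2) r nu by (smt (verit) divide_strict_right_mono)
      moreover have "\<bar>et w - et B\<bar> < \<rho>" using etd[of w B] w(2) r by simp
      ultimately have "w \<in> Rt" using sB by (auto simp: Rt_def)
      then show False using Rtout Pout w(1) by blast
    qed
  qed
  show ?thesis
    using r(1) F1 F2 F3 by (intro exI[of _ r]) (simp add: A_def B_def u_def nv_def et_def P_def)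
qed



lemma crossing2:
  fixes K P e :: "(real \<times> real) set" and n A p a :: "real \<times> real"
  assumes K: "connected K" "p \<in> K" "a \<in> K" "K \<subseteq> P" "a \<in> e"
    and hz: "\<forall>w\<in>K. (w - A) \<bullet> n = 0 \<longrightarrow> w \<in> e"
    and r: "r > 0" "\<forall>z\<in>e. \<forall>w\<in>P. dist w z < r \<longrightarrow> (w - A) \<bullet> n \<le> 0"
  shows "(p - A) \<bullet> n \<le> 0"
proof -
  let ?U = "{w. 0 < (w - A) \<bullet> n}"
  let ?V = "{w. (w - A) \<bullet> n < 0} \<union> (\<Union>z\<in>e. ball z r)"
  have oU: "open ?U" by (rule open_Collect_less) (auto intro!: continuous_intros)
  have oV: "open ?V"
    by (intro open_Un open_UN open_ball open_Collect_less ballI) (auto intro!: continuous_intros)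
  have d1: "?U \<inter> ?V \<inter> K = {}"
  proof -
    { fix w z assume w: "w \<in> K" "0 < (w - A) \<bullet> n" "z \<in> e" "w \<in> ball z r"
      have "dist w z < r" using w(4) by (simp add: dist_commute)
      then have "(w - A) \<bullet> n \<le> 0" using r(2) K(4) w by blast
      then have False using w by simp }
    then show ?thesis by auto
  qed
  have d2: "K \<subseteq> ?U \<union> ?V"
  proof
    fix w assume w: "w \<in> K"
    show "w \<in> ?U \<union> ?V"
    proof (cases "(w - A) \<bullet> n = 0")
      case True
      then have we: "w \<in> e" using hz w by blast
      have "w \<in> ball w r" using r(1) by simp
      then show ?thesis using we by blast
    next
      case False then show ?thesis by auto
    qed
  qed
  have "a \<in> ball a r" using r(1) by simp
  then have "?V \<inter> K \<noteq> {}" using K(3) K(5) by blast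
  then have "?U \<inter> K = {}" using connectedD[OF K(1) oU oV d1 d2] by blast
  then show ?thesis using K(2) by (metis (mono_tags) IntI empty_iff mem_Collect_eq not_less)
qed

lemma on_line_param:
  assumes "w \<in> line_at \<beta> c"
  shows "w = c + ((w - c) \<bullet> (cos \<beta>, sin \<beta>)) *\<^sub>R (cos \<beta>, sin \<beta>)"
proof -
  obtain t where t: "w = c + t *\<^sub>R (cos \<beta>, sin \<beta>)" using assms by (auto simp: line_at_def)
  have "(w - c) \<bullet> (cos \<beta>, sin \<beta>) = t * (cos \<beta> * cos \<beta>) + t * (sin \<beta> * sin \<beta>)"
    using t by (simp add: algebra_simps)
  also have "\<dots> = t" by (simp flip: distrib_left)
  finally have "(w - c) \<bullet> (cos \<beta>, sin \<beta>) = t" .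
  then show ?thesis using t by simp
qed

lemma seg_in_conn:
  assumes SS: "SS \<subseteq> line_at \<beta> c" "connected SS" "x \<in> SS" "y \<in> SS" and l: "0 \<le> l" "l \<le> 1"
  shows "x + l *\<^sub>R (y - x) \<in> SS"
proof -
  define d where "d = (cos \<beta>, sin \<beta>)"
  define \<phi> where "\<phi> z = (z - c) \<bullet> d" for z
  have xl: "x = c + \<phi> x *\<^sub>R d" "y = c + \<phi> y *\<^sub>R d"
    unfolding \<phi>_def d_def by (rule on_line_param, use SS in blast)+
  have pt: "x + l *\<^sub>R (y - x) = c + (\<phi> x + l * (\<phi> y - \<phi> x)) *\<^sub>R d"
  proof -
    obtain a b where ab: "a = \<phi> x" "b = \<phi> y" by blast
    have "x = c + a *\<^sub>R d" "y = c + b *\<^sub>R d" using xl ab by auto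
    then show ?thesis unfolding ab[symmetric] by (simp add: algebra_simps)
  qed
  have conn: "connected (\<phi> ` SS)"
    by (rule connected_continuous_image[OF _ SS(2)]) (auto simp: \<phi>_def intro!: continuous_intros)
  have "\<phi> x + l * (\<phi> y - \<phi> x) \<in> \<phi> ` SS"
  proof (cases "\<phi> x \<le> \<phi> y")
    case True
    have "0 \<le> l * (\<phi> y - \<phi> x)" using l True by simp
    moreover have "l * (\<phi> y - \<phi> x) \<le> (\<phi> y - \<phi> x)"
      using mult_right_mono[of l 1 "\<phi> y - \<phi> x"] l True by simp
    ultimately have "\<phi> x \<le> \<phi> x + l * (\<phi> y - \<phi> x)" "\<phi> x + l * (\<phi> y - \<phi> x) \<le> \<phi> y"
      by linarith+
    then show ?thesis using conn SS unfolding connected_iff_interval by blast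
  next
    case False
    have "l * (\<phi> y - \<phi> x) \<le> 0" using l False by (intro mult_nonneg_nonpos) auto
    moreover have "(\<phi> y - \<phi> x) \<le> l * (\<phi> y - \<phi> x)"
      using mult_right_mono_neg[of l 1 "\<phi> y - \<phi> x"] l False by simp
    ultimately have "\<phi> y \<le> \<phi> x + l * (\<phi> y - \<phi> x)" "\<phi> x + l * (\<phi> y - \<phi> x) \<le> \<phi> x"
      by linarith+
    then show ?thesis using conn SS unfolding connected_iff_interval by blast
  qed
  then obtain z where z: "z \<in> SS" "\<phi> z = \<phi> x + l * (\<phi> y - \<phi> x)"
    by (metis (no_types, lifting) imageE)
  have "z = c + \<phi> z *\<^sub>R d" unfolding \<phi>_def d_def by (rule on_line_param) (use SS z in blast)
  then show ?thesis using z pt by simp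
qed



lemma path_cross:
  fixes g :: "real \<Rightarrow> real \<times> real" and P e :: "(real \<times> real) set" and A B mB nv :: "real \<times> real"
  assumes g: "path g" "path_image g \<subseteq> P" "g 1 = A"
    and p0: "(g 0 - B) \<bullet> mB \<le> 0" "0 < (g 0 - A) \<bullet> nv"
    and AB: "(A - B) \<bullet> mB < 0" "A \<in> e" "B \<in> e"
    and strip: "\<forall>w\<in>path_image g. (w - A) \<bullet> nv = 0 \<and> (w - B) \<bullet> mB \<le> 0 \<longrightarrow> w \<in> e"
    and r: "r > 0" "\<forall>z\<in>e. \<forall>w\<in>P. dist w z < r \<longrightarrow> (w - A) \<bullet> nv \<le> 0"
    and ln: "connected (path_image g \<inter> line_at \<beta> B)" "mB = (- sin \<beta>, cos \<beta>) \<or> mB = (sin \<beta>, - cos \<beta>)"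
    and lineB: "\<forall>w\<in>line_at \<beta> B. (w - A) \<bullet> nv = 0 \<longrightarrow> w = B"
  shows False
proof -
  define \<alpha> where "\<alpha> t = (g t - B) \<bullet> mB" for t
  define \<eta> where "\<eta> t = (g t - A) \<bullet> nv" for t
  have gc: "continuous_on {0..1} g" using g(1) by (simp add: path_def)
  have ac: "continuous_on S \<alpha>" if "S \<subseteq> {0..1}" for S
    unfolding \<alpha>_def by (intro continuous_intros continuous_on_subset[OF gc that])
  have ec: "continuous_on S \<eta>" if "S \<subseteq> {0..1}" for S
    unfolding \<eta>_def by (intro continuous_intros continuous_on_subset[OF gc that])
  have gi: "g t \<in> path_image g" if "t \<in> {0..1}" for t using that by (simp add: path_image_def)
  have gP: "g t \<in> P" if "t \<in> {0..1}" for t using gi[OF that] g(2) by blast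
  have A1: "\<alpha> 1 < 0" using AB g(3) by (simp add: \<alpha>_def)
  have conn_seg: "connected (g ` {a..b})" if "0 \<le> a" "b \<le> 1" for a b
    by (rule connected_continuous_image[OF continuous_on_subset[OF gc] connected_Icc]) (use that in auto)
  define T where "T = {0} \<union> ({0..1} \<inter> \<alpha> -` {0..})"
  have Tcl: "closed T" unfolding T_def
    by (intro closed_Un closed_singleton continuous_closed_preimage[OF ac] closed_atLeastAtMost closed_atLeast) auto
  have Tne: "T \<noteq> {}" "bdd_above T" by (auto simp: T_def bdd_above_def intro!: exI[of _ 1])
  define t2 where "t2 = Sup T"
  have t2T: "t2 \<in> T" using closed_contains_Sup[OF Tne Tcl] by (simp add: t2_def)
  have t2u: "t \<le> t2" if "t \<in> T" for t using cSup_upper[OF that Tne(2)] by (simp add: t2_def)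
  have t2r: "0 \<le> t2" "t2 \<le> 1" using t2T t2u[of 0] by (auto simp: T_def)
  have after: "\<alpha> t < 0" if "t2 < t" "t \<le> 1" for t
  proof (rule ccontr)
    assume "\<not> \<alpha> t < 0"
    then have "t \<in> T" using that t2r by (auto simp: T_def)
    then show False using t2u that by fastforce
  qed
  have at: "\<alpha> t2 \<le> 0"
  proof (cases "t2 = 0")
    case True then show ?thesis using p0 by (simp add: \<alpha>_def)
  next
    case False
    show ?thesis
    proof (rule ccontr)
      assume "\<not> \<alpha> t2 \<le> 0"
      then have "\<alpha> 1 \<le> 0" "0 \<le> \<alpha> t2" using A1 by auto
      then obtain x where x: "t2 \<le> x" "x \<le> 1" "\<alpha> x = 0"
        using IVT2'[of \<alpha> 1 0 t2] ac[of "{t2..1}"] t2r by auto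
      then have "x = t2" using after[of x] by fastforce
      then show False using x \<open>\<not> \<alpha> t2 \<le> 0\<close> by simp
    qed
  qed
  show False
  proof (cases "\<eta> t2 > 0")
    case True
    have "(g t2 - A) \<bullet> nv \<le> 0"
    proof (rule crossing2[of "g ` {t2..1}" "g t2" A P e])
      show "connected (g ` {t2..1})" using conn_seg t2r by simp
      show "g t2 \<in> g ` {t2..1}" using t2r by simp
      show "A \<in> g ` {t2..1}" using t2r g(3) by (metis atLeastAtMost_iff image_eqI order_refl)
      show "g ` {t2..1} \<subseteq> P" using gP t2r by auto
      show "A \<in> e" by (rule AB(2))
      show "\<forall>w\<in>g ` {t2..1}. (w - A) \<bullet> nv = 0 \<longrightarrow> w \<in> e"
      proof (intro ballI impI)
        fix w assume w: "w \<in> g ` {t2..1}" "(w - A) \<bullet> nv = 0"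
        then obtain t where t: "t \<in> {t2..1}" "w = g t" by blast
        have "\<alpha> t \<le> 0" using t at after[of t] by (cases "t = t2") auto
        then show "w \<in> e" using strip gi[of t] t w(2) t2r by (auto simp: \<alpha>_def)
      qed
      show "r > 0" by (rule r(1))
      show "\<forall>z\<in>e. \<forall>w\<in>P. dist w z < r \<longrightarrow> (w - A) \<bullet> nv \<le> 0" by (rule r(2))
    qed
    then show False using True by (simp add: \<eta>_def)
  next
    case False
    have t20: "t2 \<noteq> 0" using False p0 by (auto simp: \<eta>_def)
    have at0: "\<alpha> t2 = 0" using t2T t20 at by (auto simp: T_def)
    define T' where "T' = {0..t2} \<inter> \<eta> -` {..0}"
    have T'cl: "closed T'" unfolding T'_def
      by (intro continuous_closed_preimage[OF ec] closed_atLeastAtMost closed_atMost) (use t2r in auto)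
    have T'ne: "T' \<noteq> {}" "bdd_below T'" using False t2r by (auto simp: T'_def bdd_below_def)
    define t1 where "t1 = Inf T'"
    have t1T: "t1 \<in> T'" using closed_contains_Inf[OF T'ne T'cl] by (simp add: t1_def)
    have t1l: "t1 \<le> t" if "t \<in> T'" for t using cInf_lower[OF that T'ne(2)] by (simp add: t1_def)
    have t1r: "0 \<le> t1" "t1 \<le> t2" using t1T by (auto simp: T'_def)
    have before: "\<eta> t > 0" if "0 \<le> t" "t < t1" for t
    proof (rule ccontr)
      assume "\<not> \<eta> t > 0"
      then have "t \<in> T'" using that t1r by (auto simp: T'_def)
      then show False using t1l that by fastforce
    qed
    have t10: "t1 \<noteq> 0" using t1T p0 by (auto simp: T'_def \<eta>_def)
    have et1: "\<eta> t1 = 0"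
    proof (rule ccontr)
      assume ne: "\<eta> t1 \<noteq> 0"
      have "\<eta> t1 \<le> 0" using t1T by (simp add: T'_def)
      moreover have "0 \<le> \<eta> 0" using p0 by (simp add: \<eta>_def)
      ultimately obtain x where x: "0 \<le> x" "x \<le> t1" "\<eta> x = 0"
        using IVT2'[of \<eta> t1 0 0] ec[of "{0..t1}"] t1r t2r by auto
      then have "x = t1" using before[of x] by fastforce
      then show False using x ne by simp
    qed
    show False
    proof (cases "\<alpha> t1 \<le> 0")
      case True
      have t1i: "t1 \<in> {0..1}" using t1r t2r by auto
      have ze: "g t1 \<in> e" using strip gi[OF t1i] True et1 by (auto simp: \<alpha>_def \<eta>_def)
      have "(g 0 - A) \<bullet> nv \<le> 0"
      proof (rule crossing2[of "g ` {0..t1}" "g 0" "g t1" P e])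
        show "connected (g ` {0..t1})" using conn_seg t1r t2r by simp
        show "g 0 \<in> g ` {0..t1}" using t1r by simp
        show "g t1 \<in> g ` {0..t1}" using t1r by simp
        show "g ` {0..t1} \<subseteq> P" using gP t1r t2r by auto
        show "g t1 \<in> e" by (rule ze)
        show "\<forall>w\<in>g ` {0..t1}. (w - A) \<bullet> nv = 0 \<longrightarrow> w \<in> e"
        proof (intro ballI impI)
          fix w assume w: "w \<in> g ` {0..t1}" "(w - A) \<bullet> nv = 0"
          then obtain t where t: "t \<in> {0..t1}" "w = g t" by blast
          have "t = t1" using before[of t] t w(2) by (fastforce simp: \<eta>_def)
          then show "w \<in> e" using ze t by simp
        qed
        show "r > 0" by (rule r(1))
        show "\<forall>z\<in>e. \<forall>w\<in>P. dist w z < r \<longrightarrow> (w - A) \<bullet> nv \<le> 0" by (rule r(2))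
      qed
      then show False using p0 by simp
    next
      case False2: False
      have "\<alpha> 0 \<le> 0" "0 \<le> \<alpha> t1" using p0 False2 by (auto simp: \<alpha>_def)
      then obtain x where x: "0 \<le> x" "x \<le> t1" "\<alpha> x = 0"
        using IVT'[of \<alpha> 0 0 t1] ac[of "{0..t1}"] t1r t2r by auto
      have xt1: "x < t1" using x False2 by (cases "x = t1") auto
      have ex1: "\<eta> x > 0" using before x xt1 by simp
      define w1 where "w1 = g x"
      define w2 where "w2 = g t2"
      define SS where "SS = path_image g \<inter> line_at \<beta> B"
      have online: "w \<in> line_at \<beta> B" if "(w - B) \<bullet> mB = 0" for w
      proof -
        have "w = B + ((w - B) \<bullet> (cos \<beta>, sin \<beta>)) *\<^sub>R (cos \<beta>, sin \<beta>)" by (rule on_line[OF ln(2) that])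
        then show ?thesis unfolding line_at_def by blast
      qed
      have w1S: "w1 \<in> SS" using x gi[of x] online[of w1] t1r t2r by (auto simp: SS_def w1_def \<alpha>_def)
      have w2S: "w2 \<in> SS" using at0 gi[of t2] online[of w2] t2r by (auto simp: SS_def w2_def \<alpha>_def)
      define e1 where "e1 = (w1 - A) \<bullet> nv"
      define e2 where "e2 = (w2 - A) \<bullet> nv"
      have e1p: "e1 > 0" using ex1 by (simp add: e1_def w1_def \<eta>_def)
      have e2n: "e2 \<le> 0" using False by (simp add: e2_def w2_def \<eta>_def)
      define y where "y l = w2 + l *\<^sub>R (w1 - w2)" for l
      have yS: "y l \<in> SS" if "0 \<le> l" "l \<le> 1" for l
        unfolding y_def by (rule seg_in_conn[of SS \<beta> B]) (use that w1S w2S ln(1) in \<open>auto simp: SS_def\<close>)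
      have yeta: "(y l - A) \<bullet> nv = e2 + l * (e1 - e2)" for l
        by (simp add: y_def e1_def e2_def inner_diff_left inner_add_left algebra_simps)
      define l0 where "l0 = - e2 / (e1 - e2)"
      have dpos: "e1 - e2 > 0" using e1p e2n by simp
      have l0r: "0 \<le> l0" "l0 < 1" using e1p e2n dpos by (auto simp: l0_def field_simps)
      have yl0: "(y l0 - A) \<bullet> nv = 0" using dpos by (simp add: yeta l0_def field_simps)
      have yB: "y l0 = B" using lineB yS[of l0] l0r yl0 by (auto simp: SS_def)
      define \<delta> where "\<delta> = min ((1 - l0) / 2) (r / (2 * (norm (w1 - w2) + 1)))"
      have nz: "norm (w1 - w2) + 1 > 0" by (smt (verit) norm_ge_zero)
      have \<delta>p: "\<delta> > 0" using l0r r(1) nz by (simp add: \<delta>_def divide_pos_pos)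
      have "\<delta> \<le> (1 - l0) / 2" unfolding \<delta>_def by (rule min.cobounded1)
      then have \<delta>1: "l0 + \<delta> \<le> 1" using l0r by (simp add: field_simps)
      have \<delta>r: "\<delta> * norm (w1 - w2) < r"
      proof -
        have "\<delta> \<le> r / (2 * (norm (w1 - w2) + 1))" unfolding \<delta>_def by (rule min.cobounded2)
        then have "\<delta> * (norm (w1 - w2) + 1) \<le> r / 2" using nz by (simp add: field_simps)
        moreover have "\<delta> * norm (w1 - w2) < \<delta> * (norm (w1 - w2) + 1)" using \<delta>p by (simp add: algebra_simps)
        ultimately show ?thesis using r(1) by linarith
      qed
      have yin: "y (l0 + \<delta>) \<in> P" using yS[of "l0 + \<delta>"] l0r \<delta>p \<delta>1 g(2) by (auto simp: SS_def)
      have yd: "y (l0 + \<delta>) - B = \<delta> *\<^sub>R (w1 - w2)" using yB by (simp add: y_def algebra_simps)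
      have "dist (y (l0 + \<delta>)) B < r" using yd \<delta>r \<delta>p by (simp add: dist_norm)
      then have "(y (l0 + \<delta>) - A) \<bullet> nv \<le> 0" using r(2) AB(3) yin by blast
      moreover have "(y (l0 + \<delta>) - A) \<bullet> nv > 0"
      proof -
        have "(y (l0 + \<delta>) - A) \<bullet> nv = (y l0 - A) \<bullet> nv + \<delta> * (e1 - e2)"
          unfolding yeta by (simp add: algebra_simps)
        then show ?thesis using yl0 \<delta>p dpos by simp
      qed
      ultimately show False by simp
    qed
  qed
qed



lemma trig_facts:
  assumes "0 < \<theta>" "\<theta> < pi / 2"
  shows "sin \<theta> > 0" "cos \<theta> > 0" "sin (\<theta> + pi/2) = cos \<theta>" "cos (\<theta> + pi/2) = - sin \<theta>"
proof -
  show "sin \<theta> > 0" using assms by (intro sin_gt_zero) auto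
  show "cos \<theta> > 0" using assms by (intro cos_gt_zero) auto
  show "sin (\<theta> + pi/2) = cos \<theta>" by (simp add: sin_add)
  show "cos (\<theta> + pi/2) = - sin \<theta>" by (simp add: cos_add)
qed

lemma choose_m:
  assumes th: "0 < \<theta>" "\<theta> < pi / 2" and u: "u \<bullet> dvec D = 0" "u \<noteq> 0"
  shows "\<exists>\<beta> m. (\<beta> = \<theta> \<or> \<beta> = \<theta> + pi/2) \<and> (m = (- sin \<beta>, cos \<beta>) \<or> m = (sin \<beta>, - cos \<beta>))
            \<and> m \<bullet> u < 0 \<and> 0 < m \<bullet> dvec D"
proof -
  note tf = trig_facts[OF th]
  obtain u1 u2 where uu: "u = (u1, u2)" by (cases u)
  show ?thesis
  proof (cases D)
    case N
    then have u2: "u2 = 0" "u1 \<noteq> 0" using u uu by (auto simp: zero_prod_def)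
    show ?thesis
    proof (cases "u1 > 0")
      case True
      then show ?thesis using N u2 uu tf
        by (intro exI[of _ \<theta>] exI[of _ "(- sin \<theta>, cos \<theta>)"]) (simp add: mult_pos_pos)
    next
      case False
      then have "u1 < 0" using u2 by simp
      then show ?thesis using N u2 uu tf
        by (intro exI[of _ "\<theta> + pi/2"] exI[of _ "(cos \<theta>, sin \<theta>)"]) (simp add: mult_pos_neg)
    qed
  next
    case S
    then have u2: "u2 = 0" "u1 \<noteq> 0" using u uu by (auto simp: zero_prod_def)
    show ?thesis
    proof (cases "u1 > 0")
      case True
      then show ?thesis using S u2 uu tf
        by (intro exI[of _ "\<theta> + pi/2"] exI[of _ "(- cos \<theta>, - sin \<theta>)"]) (simp add: mult_pos_pos)
    next
      case False
      then have "u1 < 0" using u2 by simp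
      then show ?thesis using S u2 uu tf
        by (intro exI[of _ \<theta>] exI[of _ "(sin \<theta>, - cos \<theta>)"]) (simp add: mult_pos_neg)
    qed
  next
    case E
    then have u2: "u1 = 0" "u2 \<noteq> 0" using u uu by (auto simp: zero_prod_def)
    show ?thesis
    proof (cases "u2 > 0")
      case True
      then show ?thesis using E u2 uu tf
        by (intro exI[of _ \<theta>] exI[of _ "(sin \<theta>, - cos \<theta>)"]) (simp add: mult_pos_pos)
    next
      case False
      then have "u2 < 0" using u2 by simp
      then show ?thesis using E u2 uu tf
        by (intro exI[of _ "\<theta> + pi/2"] exI[of _ "(cos \<theta>, sin \<theta>)"]) (simp add: mult_pos_neg)
    qed
  next
    case W
    then have u2: "u1 = 0" "u2 \<noteq> 0" using u uu by (auto simp: zero_prod_def)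
    show ?thesis
    proof (cases "u2 > 0")
      case True
      then show ?thesis using W u2 uu tf
        by (intro exI[of _ "\<theta> + pi/2"] exI[of _ "(- cos \<theta>, - sin \<theta>)"]) (simp add: mult_pos_pos)
    next
      case False
      then have "u2 < 0" using u2 by simp
      then show ?thesis using W u2 uu tf
        by (intro exI[of _ \<theta>] exI[of _ "(- sin \<theta>, cos \<theta>)"]) (simp add: mult_pos_neg)
    qed
  qed
qed

lemma dn_nonzero:
  assumes "0 < \<theta>" "\<theta> < pi / 2" "\<beta> = \<theta> \<or> \<beta> = \<theta> + pi/2"
  shows "(cos \<beta>, sin \<beta>) \<bullet> dvec D \<noteq> 0"
  using trig_facts[OF assms(1,2)] assms(3) by (cases D) auto



lemma main_kernel:
  assumes op: "orth_polygon vs" and ex: "extremity vs D k" and th: "0 < \<theta>" "\<theta> < pi / 2"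
    and p: "p \<in> kernel_theta (poly_region vs) \<theta>"
  shows "(p - vs!k) \<bullet> dvec D \<le> 0 \<and> ((p - vs!k) \<bullet> dvec D = 0 \<longrightarrow> p \<in> edge_seg vs k)"
proof -
  define A where "A = vs!k"
  define B where "B = vs ! nxt vs k"
  define nv where "nv = dvec D"
  define u where "u = B - A"
  define P where "P = poly_region vs"
  have k: "k < length vs" and uperp: "u \<bullet> nv = 0"
    using ex by (auto simp: extremity_def D_edge_def A_def B_def u_def nv_def)
  have n3: "length vs \<ge> 3" using op by (simp add: orth_polygon_def)
  have ax: "\<And>i. i < length vs \<Longrightarrow> vs ! i \<noteq> vs ! nxt vs i" using op by (simp add: orth_polygon_def)
  have AB: "A \<noteq> B" using ax[OF k] by (simp add: A_def B_def)
  have u0: "u \<noteq> 0" using AB by (simp add: u_def)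
  have uu: "u \<bullet> u > 0" using u0 by simp
  obtain r where r: "r > 0"
    and F1: "\<forall>z\<in>closed_segment A B. \<forall>w\<in>P. dist w z < r \<longrightarrow> (w - A) \<bullet> nv \<le> 0"
    and F2: "\<forall>w\<in>P. dist w A < r \<longrightarrow> 0 \<le> (w - A) \<bullet> u"
    and F3: "\<forall>w\<in>P. dist w B < r \<longrightarrow> (w - B) \<bullet> u \<le> 0"
    using local_structure[OF op ex] unfolding A_def[symmetric] B_def[symmetric] nv_def[symmetric]
      u_def[symmetric] P_def[symmetric] by blast
  obtain \<beta>A mA where mA: "\<beta>A = \<theta> \<or> \<beta>A = \<theta> + pi/2" "mA = (- sin \<beta>A, cos \<beta>A) \<or> mA = (sin \<beta>A, - cos \<beta>A)"
    "mA \<bullet> u < 0" "0 < mA \<bullet> nv"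
    using choose_m[OF th, of u D] uperp u0 by (auto simp: nv_def)
  obtain \<beta>B mB where mB: "\<beta>B = \<theta> \<or> \<beta>B = \<theta> + pi/2" "mB = (- sin \<beta>B, cos \<beta>B) \<or> mB = (sin \<beta>B, - cos \<beta>B)"
    "mB \<bullet> (- u) < 0" "0 < mB \<bullet> nv"
    using choose_m[OF th, of "- u" D] uperp u0 by (auto simp: nv_def)
  have mBu: "0 < u \<bullet> mB" using mB(3) by (simp add: inner_commute)
  have mAu: "u \<bullet> mA < 0" using mA(3) by (simp add: inner_commute)
  have mAn: "0 < nv \<bullet> mA" using mA(4) by (simp add: inner_commute)
  have mBn: "0 < nv \<bullet> mB" using mB(4) by (simp add: inner_commute)
  define sc where "sc w = ((w - A) \<bullet> u) / (u \<bullet> u)" for w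
  have dec: "w - A = sc w *\<^sub>R u + ((w - A) \<bullet> nv) *\<^sub>R nv" for w
    using decomp[of u D "w - A"] uperp u0 by (simp add: nv_def sc_def)
  have decB: "w - B = (sc w - 1) *\<^sub>R u + ((w - A) \<bullet> nv) *\<^sub>R nv" for w
  proof -
    have "w - B = (w - A) - u" by (simp add: u_def)
    then show ?thesis using dec[of w] by (simp add: algebra_simps)
  qed
  have ipA: "(w - A) \<bullet> mA = sc w * (u \<bullet> mA) + ((w - A) \<bullet> nv) * (nv \<bullet> mA)" for w
    by (subst dec) (simp add: inner_add_left)
  have ipB: "(w - B) \<bullet> mB = (sc w - 1) * (u \<bullet> mB) + ((w - A) \<bullet> nv) * (nv \<bullet> mB)" for w
    by (subst decB) (simp add: inner_add_left)
  have scpos: "0 \<le> sc w" if "0 \<le> (w - A) \<bullet> u" for w using that uu by (simp add: sc_def)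
  have scle: "sc w \<le> 1" if "(w - B) \<bullet> u \<le> 0" for w
  proof -
    have "(w - B) \<bullet> u = (w - A) \<bullet> u - u \<bullet> u" by (simp add: u_def inner_diff_left)
    then have "(w - A) \<bullet> u \<le> u \<bullet> u" using that by simp
    then show ?thesis using uu by (simp add: sc_def)
  qed
  have Ae: "A \<in> closed_segment A B" "B \<in> closed_segment A B" by auto
  have eP: "closed_segment A B \<subseteq> P"
  proof -
    have "edge_seg vs k \<subseteq> path_image (boundary_path vs)" using loop_basic(6)[OF n3] k by auto
    then show ?thesis by (auto simp: P_def poly_region_def edge_seg_def A_def B_def)
  qed
  have AP: "A \<in> P" and BP: "B \<in> P" using eP Ae by auto
  have isoA: "\<forall>w\<in>P. w \<noteq> A \<and> dist w A < r \<longrightarrow> (w - A) \<bullet> mA < 0"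
  proof (intro ballI impI)
    fix w assume w: "w \<in> P" "w \<noteq> A \<and> dist w A < r"
    have h: "(w - A) \<bullet> nv \<le> 0" using F1 Ae(1) w by blast
    have s: "0 \<le> sc w" using F2 w scpos by blast
    show "(w - A) \<bullet> mA < 0"
    proof (cases "sc w = 0")
      case True
      then have "(w - A) \<bullet> nv \<noteq> 0" using dec[of w] w(2) by auto
      then have "(w - A) \<bullet> nv < 0" using h by simp
      then show ?thesis using ipA[of w] True mAn by (simp add: mult_neg_pos)
    next
      case False
      then have "sc w > 0" using s by simp
      then have "sc w * (u \<bullet> mA) < 0" using mAu by (simp add: mult_pos_neg)
      moreover have "((w - A) \<bullet> nv) * (nv \<bullet> mA) \<le> 0" using h mAn by (simp add: mult_nonpos_nonneg)
      ultimately show ?thesis using ipA[of w] by simp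
    qed
  qed
  have isoB: "\<forall>w\<in>P. w \<noteq> B \<and> dist w B < r \<longrightarrow> (w - B) \<bullet> mB < 0"
  proof (intro ballI impI)
    fix w assume w: "w \<in> P" "w \<noteq> B \<and> dist w B < r"
    have h: "(w - A) \<bullet> nv \<le> 0" using F1 Ae(2) w by blast
    have s: "sc w \<le> 1" using F3 w scle by blast
    show "(w - B) \<bullet> mB < 0"
    proof (cases "sc w = 1")
      case True
      then have "(w - A) \<bullet> nv \<noteq> 0" using decB[of w] w(2) by auto
      then have "(w - A) \<bullet> nv < 0" using h by simp
      then show ?thesis using ipB[of w] True mBn by (simp add: mult_neg_pos)
    next
      case False
      then have "sc w - 1 < 0" using s by simp
      then have "(sc w - 1) * (u \<bullet> mB) < 0" using mBu by (simp add: mult_neg_pos)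
      moreover have "((w - A) \<bullet> nv) * (nv \<bullet> mB) \<le> 0" using h mBn by (simp add: mult_nonpos_nonneg)
      ultimately show ?thesis using ipB[of w] by simp
    qed
  qed
  have strip: "w \<in> closed_segment A B"
    if "(w - A) \<bullet> mA \<le> 0" "(w - B) \<bullet> mB \<le> 0" "(w - A) \<bullet> nv = 0" for w
  proof -
    have "sc w * (u \<bullet> mA) \<le> 0" using that ipA[of w] by simp
    then have s0: "0 \<le> sc w" using mAu by (simp add: mult_le_0_iff)
    have "(sc w - 1) * (u \<bullet> mB) \<le> 0" using that ipB[of w] by simp
    then have s1: "sc w \<le> 1" using mBu by (simp add: mult_le_0_iff)
    have "w = A + sc w *\<^sub>R (B - A)" using dec[of w] that(3) by (simp add: u_def algebra_simps)
    then show ?thesis unfolding seg_pt using s0 s1 by blast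
  qed
  have pk: "p \<in> P" "\<forall>q\<in>P. sees_theta P \<theta> p q" using p by (auto simp: kernel_theta_def P_def)
  obtain gA where gA: "path gA" "path_image gA \<subseteq> P" "pathstart gA = p" "pathfinish gA = A"
    "beta_convex \<theta> gA" "beta_convex (\<theta> + pi / 2) gA"
    using pk(2) AP unfolding sees_theta_def by blast
  obtain gB where gB: "path gB" "path_image gB \<subseteq> P" "pathstart gB = p" "pathfinish gB = B"
    "beta_convex \<theta> gB" "beta_convex (\<theta> + pi / 2) gB"
    using pk(2) BP unfolding sees_theta_def by blast
  have bcA: "connected (path_image gA \<inter> line_at \<beta> c)" if "\<beta> = \<theta> \<or> \<beta> = \<theta> + pi/2" for \<beta> c
    using that gA(5,6) unfolding beta_convex_def by blast
  have bcB: "connected (path_image gB \<inter> line_at \<beta> c)" if "\<beta> = \<theta> \<or> \<beta> = \<theta> + pi/2" for \<beta> c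
    using that gB(5,6) unfolding beta_convex_def by blast
  have KB: "\<forall>w\<in>path_image gB. (w - B) \<bullet> mB \<le> 0"
    by (rule isolate[OF connected_path_image[OF gB(1)] _ gB(2) bcB[OF mB(1)] mB(2) r isoB])
      (use gB(4) pathfinish_in_path_image in metis)
  have pB: "(p - B) \<bullet> mB \<le> 0" using KB gB(3) pathstart_in_path_image by metis
  have KA: "\<forall>w\<in>path_image gA. (w - A) \<bullet> mA \<le> 0"
    by (rule isolate[OF connected_path_image[OF gA(1)] _ gA(2) bcA[OF mA(1)] mA(2) r isoA])
      (use gA(4) pathfinish_in_path_image in metis)
  have pA: "(p - A) \<bullet> mA \<le> 0" using KA gA(3) pathstart_in_path_image by metis
  have c1: "(p - A) \<bullet> nv \<le> 0"
  proof (rule ccontr)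
    assume a: "\<not> (p - A) \<bullet> nv \<le> 0"
    show False
    proof (rule path_cross[where g=gA and P=P and e="closed_segment A B" and A=A and B=B and mB=mB and nv=nv and r=r and \<beta>=\<beta>B])
      show "path gA" "path_image gA \<subseteq> P" using gA by auto
      show "gA 1 = A" using gA(4) by (simp add: pathfinish_def)
      show "(gA 0 - B) \<bullet> mB \<le> 0" using pB gA(3) by (simp add: pathstart_def)
      show "0 < (gA 0 - A) \<bullet> nv" using a gA(3) by (simp add: pathstart_def)
      have "(A - B) \<bullet> mB = - (u \<bullet> mB)" by (simp add: u_def inner_diff_left)
      then show "(A - B) \<bullet> mB < 0" using mBu by simp
      show "A \<in> closed_segment A B" "B \<in> closed_segment A B" by auto
      show "\<forall>w\<in>path_image gA. (w - A) \<bullet> nv = 0 \<and> (w - B) \<bullet> mB \<le> 0 \<longrightarrow> w \<in> closed_segment A B"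
        using KA strip by blast
      show "r > 0" by (rule r)
      show "\<forall>z\<in>closed_segment A B. \<forall>w\<in>P. dist w z < r \<longrightarrow> (w - A) \<bullet> nv \<le> 0" by (rule F1)
      show "connected (path_image gA \<inter> line_at \<beta>B B)" by (rule bcA[OF mB(1)])
      show "mB = (- sin \<beta>B, cos \<beta>B) \<or> mB = (sin \<beta>B, - cos \<beta>B)" by (rule mB(2))
      show "\<forall>w\<in>line_at \<beta>B B. (w - A) \<bullet> nv = 0 \<longrightarrow> w = B"
      proof (intro ballI impI)
        fix w assume w: "w \<in> line_at \<beta>B B" "(w - A) \<bullet> nv = 0"
        then obtain t where t: "w = B + t *\<^sub>R (cos \<beta>B, sin \<beta>B)" by (auto simp: line_at_def)
        have "(w - A) \<bullet> nv = u \<bullet> nv + t * ((cos \<beta>B, sin \<beta>B) \<bullet> nv)"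
        proof -
          have "w - A = u + t *\<^sub>R (cos \<beta>B, sin \<beta>B)" using t by (simp add: u_def algebra_simps del: scaleR_Pair)
          then show ?thesis by (simp add: inner_add_left del: scaleR_Pair)
        qed
        then have "t * ((cos \<beta>B, sin \<beta>B) \<bullet> nv) = 0" using w(2) uperp by simp
        moreover have "(cos \<beta>B, sin \<beta>B) \<bullet> nv \<noteq> 0" using dn_nonzero[OF th mB(1)] by (simp add: nv_def)
        ultimately have "t = 0" by simp
        then show "w = B" using t by (simp add: zero_prod_def)
      qed
    qed
  qed
  have c2: "(p - A) \<bullet> nv = 0 \<longrightarrow> p \<in> edge_seg vs k"
    using strip[OF pA pB] by (simp add: edge_seg_def A_def B_def)
  show ?thesis using c1 c2 by (simp add: A_def nv_def)
qed

lemma no_consec: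
  assumes op: "orth_polygon vs" and a: "extremity vs D a" and b: "extremity vs D (nxt vs a)"
  shows False
proof -
  have ka: "a < length vs" and ua: "(vs ! nxt vs a - vs ! a) \<bullet> dvec D = 0"
    using a by (auto simp: extremity_def D_edge_def)
  have ub: "(vs ! nxt vs (nxt vs a) - vs ! nxt vs a) \<bullet> dvec D = 0"
    using b by (auto simp: extremity_def D_edge_def)
  obtain c where c: "vs ! nxt vs (nxt vs a) - vs ! nxt vs a = c *\<^sub>R dvec D"
    using par_adj(2)[OF op ka ua] by blast
  have "dvec D \<bullet> dvec D = 1" using dvec_norm[of D] by (metis norm_eq_1)
  then have "c = 0" using ub c by simp
  then have "vs ! nxt vs (nxt vs a) = vs ! nxt vs a" using c by simp
  moreover have "nxt vs a < length vs" using idx(1)[OF ka] .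
  ultimately show False using op by (auto simp: orth_polygon_def)
qed

theorem lemma2:
  fixes vs :: "(real \<times> real) list" and D :: dir and k :: nat and \<theta> :: real
  assumes "orth_polygon vs"
    and "\<exists>i j. i \<noteq> j \<and> extremity vs D i \<and> extremity vs D j"
    and "extremity vs D k"
    and "\<forall>j. extremity vs D j \<longrightarrow> level D (vs ! k) \<le> level D (vs ! j)"
    and "0 < \<theta>" and "\<theta> < pi / 2"
  shows "(\<forall>j. extremity vs D j \<and> level D (vs ! k) < level D (vs ! j) \<longrightarrow>
              edge_seg vs j \<inter> kernel_theta (poly_region vs) \<theta> = {}) \<and>
         (\<forall>j. extremity vs D j \<and> j \<noteq> k \<and> level D (vs ! j) = level D (vs ! k) \<longrightarrow>
              (edge_seg vs k \<union> edge_seg vs j) \<inter> kernel_theta (poly_region vs) \<theta> = {})"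
proof -
  note op = assms(1) and th = assms(5,6)
  have lvl: "level D q = level D (vs ! j)" if h: "extremity vs D j" "q \<in> edge_seg vs j" for j q
  proof -
    have u: "(vs ! nxt vs j - vs ! j) \<bullet> dvec D = 0" using h(1) by (auto simp: extremity_def D_edge_def)
    obtain t where "q = vs ! j + t *\<^sub>R (vs ! nxt vs j - vs ! j)"
      using h(2) unfolding edge_seg_def seg_pt by blast
    then show ?thesis using u by (simp add: level_def inner_add_left)
  qed
  have mk: "level D q = level D (vs ! j) \<and> q \<in> edge_seg vs j"
    if "extremity vs D j" "q \<in> kernel_theta (poly_region vs) \<theta>" "level D (vs ! j) \<le> level D q" for j q
  proof -
    have "(q - vs ! j) \<bullet> dvec D \<le> 0 \<and> ((q - vs ! j) \<bullet> dvec D = 0 \<longrightarrow> q \<in> edge_seg vs j)"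
      by (rule main_kernel[OF op that(1) th that(2)])
    then show ?thesis using that(3) by (auto simp: level_def inner_diff_left)
  qed
  have disj: "edge_seg vs k \<inter> edge_seg vs j = {}" if "extremity vs D j" "j \<noteq> k" for j
  proof -
    have kk: "k < length vs" "j < length vs" using assms(3) that(1) by (auto simp: extremity_def D_edge_def)
    have "j \<noteq> nxt vs k" using no_consec[OF op assms(3)] that(1) by blast
    moreover have "k \<noteq> nxt vs j" using no_consec[OF op that(1)] assms(3) by blast
    ultimately show ?thesis using edges_disj[OF op kk] that(2) by blast
  qed
  show ?thesis
  proof (intro conjI allI impI)
    fix j assume j: "extremity vs D j \<and> level D (vs ! k) < level D (vs ! j)"
    show "edge_seg vs j \<inter> kernel_theta (poly_region vs) \<theta> = {}"
    proof (rule ccontr)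
      assume "edge_seg vs j \<inter> kernel_theta (poly_region vs) \<theta> \<noteq> {}"
      then obtain q where q: "q \<in> edge_seg vs j" "q \<in> kernel_theta (poly_region vs) \<theta>" by blast
      have "level D q = level D (vs ! j)" using lvl j q by blast
      then have "level D q = level D (vs ! k)" using mk[OF assms(3) q(2)] j by simp
      then show False using j \<open>level D q = level D (vs ! j)\<close> by simp
    qed
  next
    fix j assume j: "extremity vs D j \<and> j \<noteq> k \<and> level D (vs ! j) = level D (vs ! k)"
    show "(edge_seg vs k \<union> edge_seg vs j) \<inter> kernel_theta (poly_region vs) \<theta> = {}"
    proof (rule ccontr)
      assume "(edge_seg vs k \<union> edge_seg vs j) \<inter> kernel_theta (poly_region vs) \<theta> \<noteq> {}"
      then obtain q where q: "q \<in> edge_seg vs k \<union> edge_seg vs j" "q \<in> kernel_theta (poly_region vs) \<theta>"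
        by blast
      have "q \<in> edge_seg vs k \<and> q \<in> edge_seg vs j"
      proof (cases "q \<in> edge_seg vs j")
        case True
        have "level D q = level D (vs ! k)" using lvl[of j q] j True by simp
        then have "q \<in> edge_seg vs k" using mk[OF assms(3) q(2)] by simp
        then show ?thesis using True by simp
      next
        case False
        then have qk: "q \<in> edge_seg vs k" using q(1) by simp
        have "level D q = level D (vs ! j)" using lvl[OF assms(3) qk] j by simp
        then have "q \<in> edge_seg vs j" using mk[of j q] j q(2) by simp
        then show ?thesis using qk by simp
      qed
      then show False using disj[of j] j by blast
    qed
  qed
qed


end
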